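(* Let $\{R_\theta\}_{\theta\in\Theta}\subseteq\mathcal R$ be submodular and $p_\theta\in\mathbb R$ for $\theta\in\Theta$. Then $(R_\theta,p_\theta)_{\theta\in\Theta}$ is individually rational and incentive compatible if and only if both of the following hold: (1) for every $\theta\in\Theta$, $$p_\theta=p_{\underline\theta}+\int_0^{\bar L}\big[1-g_{\underline\theta}(F_{\underline\theta}(l))\big]\frac{\partial R_{\underline\theta}(l)}{\partial l}dl-\int_{\underline\theta}^{\theta}\int_0^{\bar L}\Big[\frac{\partial g_s}{\partial s}(F_s(l))+g_s'(F_s(l))\frac{\partial F_s(l)}{\partial s}\Big]\frac{\partial R_s(l)}{\partial l}\,dl\,ds-\int_0^{\bar L}\big[1-g_\theta(F_\theta(l))\big]\frac{\partial R_\theta(l)}{\partial l}dl,$$ with $p_{\underline\theta}\le\int_0^{\bar L}\big[1-g_{\underline\theta}(F_{\underline\theta}(l))\big]\big[1-\frac{\partial R_{\underline\theta}(l)}{\partial l}\big]dl$; and (2) $\int_\Theta V_\theta(R_\theta,p_\theta)\,d\mu\ge0$.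
   Context: Setting (Yaari dual-utility insurance model). $(S,\Sigma,\mathbb P)$ is a probability space. Types: $\Theta=[\underline\theta,\bar\theta]$ with Borel $\sigma$-algebra and a probability measure $\mu$ with a Lebesgue density $q$. Fix $\bar L<\infty$. For each $\theta$ the type-$\theta$ agent faces a loss $L_\theta$ (bounded, $\Sigma$-measurable, values in $[0,\bar L]$) with continuous distribution function $F_\theta(l)=\mathbb P(L_\theta\le l)$. Retention functions: $\mathcal R=\{R:[0,\bar L]\to[0,\bar L]: R(0)=0,\ 0\le\partial R(l)/\partial l\le1\}$. A menu is a family $(R_\theta,p_\theta)_{\theta\in\Theta}$. A collection $\{R_\theta\}$ is submodular if $\partial R_\theta(l)/\partial l$ is non-increasing in $\theta$ for every $l$. A distortion function is a nondecreasing $g:[0,1]\to[0,1]$ with $g(0)=0,g(1)=1$; type $\theta$ has distortion $g_\theta$ (with $g'_\theta$ the derivative in $t$), the insurer $g^{In}$. Utilities: $U_\theta(R,p)=-p-\int_0^{\bar L}[1-g_\theta(F_\theta(l))]\frac{\partial R(l)}{\partial l}dl$, $V_\theta(R,p)=p-\int_0^{\bar L}[1-g^{In}(F_\theta(l))](1-\frac{\partial R(l)}{\partial l})dl$, no-insurance utility $U_\theta(L_\theta,0)=-\int_0^{\bar L}[1-g_\theta(F_\theta(l))]dl$. Throughout, for every menu the maps $\theta\mapsto U_\theta(R_\theta,p_\theta)$, $\theta\mapsto V_\theta(R_\theta,p_\theta)$ lie in $L^1(\Theta,\mu)$. Individually rational: (P1) $U_\theta(R_\theta,p_\theta)\ge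 U_\theta(L_\theta,0)$ for all $\theta$ and (P2) $\int_\Theta V_\theta(R_\theta,p_\theta)d\mu\ge0$. Incentive compatible: $U_\theta(R_\theta,p_\theta)\ge U_\theta(R_{\theta'},p_{\theta'})$ for all $\theta,\theta'$. Standing assumptions: (A1) $g^{In}(t)\ge g_\theta(t)$ for all $t,\theta$. (A2) $\theta\mapsto F_\theta(l)$ differentiable, $\{F_\theta\}$ uniformly Lipschitz in $\theta$, $\partial F_\theta(l)/\partial\theta\le0$ for all $l$. (A3) each $g_\theta$ differentiable with $g'_\theta\le\delta$ for a common $\delta<\infty$; $\theta\mapsto g_\theta(t)$ differentiable, uniformly Lipschitz in $\theta$; $\partial g_\theta(t)/\partial\theta\le0$ for $t\in(0,1)$. *)

theory Defs
  imports "HOL-Probability.Probability"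
begin

definition dR :: "real \<Rightarrow> (real \<Rightarrow> real) \<Rightarrow> real \<Rightarrow> real" where
  "dR Lbar R l = vector_derivative R (at l within {0..Lbar})"

definition retention :: "real \<Rightarrow> (real \<Rightarrow> real) \<Rightarrow> bool" where
  "retention Lbar R \<longleftrightarrow> R 0 = 0 \<and> (\<forall>l\<in>{0..Lbar}. R l \<in> {0..Lbar}) \<and>
     (\<forall>l\<in>{0..Lbar}. R differentiable (at l within {0..Lbar}) \<and>
        0 \<le> dR Lbar R l \<and> dR Lbar R l \<le> 1)"

definition distortion :: "(real \<Rightarrow> real) \<Rightarrow> bool" where
  "distortion g \<longleftrightarrow> mono_on {0..1} g \<and> (\<forall>t\<in>{0..1}. g t \<in> {0..1}) \<and> g 0 = 0 \<and> g 1 = 1"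

text \<open>Agent's Yaari utility U_theta(R,p), with distortion g and loss distribution F.\<close>
definition Uag :: "real \<Rightarrow> (real \<Rightarrow> real) \<Rightarrow> (real \<Rightarrow> real) \<Rightarrow> (real \<Rightarrow> real) \<Rightarrow> real \<Rightarrow> real" where
  "Uag Lbar g F R p = - p - integral {0..Lbar} (\<lambda>l. (1 - g (F l)) * dR Lbar R l)"

text \<open>Insurer's Yaari utility V_theta(R,p), with insurer distortion gIn.\<close>
definition Vin :: "real \<Rightarrow> (real \<Rightarrow> real) \<Rightarrow> (real \<Rightarrow> real) \<Rightarrow> (real \<Rightarrow> real) \<Rightarrow> real \<Rightarrow> real" where
  "Vin Lbar gIn F R p = p - integral {0..Lbar} (\<lambda>l. (1 - gIn (F l)) * (1 - dR Lbar R l))"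

end

theory Submission
  imports Defs
begin

lemma deriv_seq:
  fixes f :: "real \<Rightarrow> real"
  assumes "f differentiable (at x within S)" "y \<longlonglongrightarrow> x" "\<And>n. y n \<in> S" "\<And>n. y n \<noteq> x"
  shows "(\<lambda>n. (f (y n) - f x) / (y n - x)) \<longlonglongrightarrow> vector_derivative f (at x within S)"
proof -
  have "(f has_real_derivative vector_derivative f (at x within S)) (at x within S)"
    using assms(1) vector_derivative_works has_real_derivative_iff_has_vector_derivative by blast
  then have t: "((\<lambda>z. (f z - f x) / (z - x)) \<longlongrightarrow> vector_derivative f (at x within S)) (at x within S)"
    using has_field_derivative_iff by blast
  have "filterlim y (at x within S) sequentially"
    using assms(2-4) by (auto simp: filterlim_at)
  from filterlim_compose[OF t this] show ?thesis .
qed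

definition sq :: "real \<Rightarrow> real \<Rightarrow> real \<Rightarrow> nat \<Rightarrow> real" where
  "sq lo hi x n = (if x < hi then x + (hi - x) / (real n + 2) else x - (hi - lo) / (real n + 2))"

lemma sq_props:
  assumes "lo < hi" "x \<in> {lo..hi}"
  shows "sq lo hi x n \<in> {lo..hi}" "sq lo hi x n \<noteq> x" "sq lo hi x \<longlonglongrightarrow> x"
proof -
  have n2: "real n + 2 \<ge> 2" by simp
  show "sq lo hi x n \<in> {lo..hi}"
  proof (cases "x < hi")
    case True
    have "(hi - x) / (real n + 2) \<le> (hi - x)" using True by (simp add: divide_le_eq)
    moreover have "0 \<le> (hi - x) / (real n + 2)" using True by simp
    ultimately have "lo \<le> x + (hi - x) / (real n + 2)" "x + (hi - x) / (real n + 2) \<le> hi"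
      using assms by auto
    then show ?thesis using True by (simp add: sq_def)
  next
    case False
    then have "x = hi" using assms by auto
    have "(hi - lo) / (real n + 2) \<le> (hi - lo)" using assms by (simp add: divide_le_eq)
    moreover have "0 \<le> (hi - lo) / (real n + 2)" using assms by simp
    ultimately have "lo \<le> x - (hi - lo) / (real n + 2)" "x - (hi - lo) / (real n + 2) \<le> hi"
      using assms \<open>x = hi\<close> by auto
    then show ?thesis using False by (simp add: sq_def)
  qed
  show "sq lo hi x n \<noteq> x" using assms by (auto simp: sq_def)
  have lim0: "(\<lambda>n. c / (real n + 2)) \<longlonglongrightarrow> 0" for c :: real
  proof -
    have "(\<lambda>n. c / real (n + 2)) \<longlonglongrightarrow> 0"
      using LIMSEQ_ignore_initial_segment[OF lim_const_over_n[of c], of 2] by simp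
    then show ?thesis by (simp add: add.commute)
  qed
  show "sq lo hi x \<longlonglongrightarrow> x"
  proof (cases "x < hi")
    case True
    have e: "sq lo hi x = (\<lambda>n. x + (hi - x) / (real n + 2))" using True by (simp add: sq_def fun_eq_iff)
    show ?thesis unfolding e using tendsto_add[OF tendsto_const lim0[of "hi - x"], of x] by simp
  next
    case False
    have e: "sq lo hi x = (\<lambda>n. x - (hi - lo) / (real n + 2))" using False by (simp add: sq_def fun_eq_iff)
    show ?thesis unfolding e using tendsto_diff[OF tendsto_const lim0[of "hi - lo"], of x] by simp
  qed
qed

lemma deriv_sq:
  fixes f :: "real \<Rightarrow> real"
  assumes "f differentiable (at x within {lo..hi})" "lo < hi" "x \<in> {lo..hi}"
  shows "(\<lambda>n. (f (sq lo hi x n) - f x) / (sq lo hi x n - x)) \<longlonglongrightarrow> vector_derivative f (at x within {lo..hi})"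
  using deriv_seq[OF assms(1) sq_props(3)[OF assms(2,3)]] sq_props(1,2)[OF assms(2,3)] by blast

lemma deriv_bound:
  fixes f :: "real \<Rightarrow> real"
  assumes "f differentiable (at x within {lo..hi})" "lo < hi" "x \<in> {lo..hi}"
    and "\<And>y. y \<in> {lo..hi} \<Longrightarrow> \<bar>f y - f x\<bar> \<le> K * \<bar>y - x\<bar>"
  shows "\<bar>vector_derivative f (at x within {lo..hi})\<bar> \<le> K"
proof -
  let ?q = "\<lambda>n. (f (sq lo hi x n) - f x) / (sq lo hi x n - x)"
  have "(\<lambda>n. \<bar>?q n\<bar>) \<longlonglongrightarrow> \<bar>vector_derivative f (at x within {lo..hi})\<bar>"
    using tendsto_rabs[OF deriv_sq[OF assms(1-3)]] .
  moreover have "\<bar>?q n\<bar> \<le> K" for n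
  proof -
    have ne: "sq lo hi x n - x \<noteq> 0" using sq_props(2)[OF assms(2,3)] by simp
    have "\<bar>f (sq lo hi x n) - f x\<bar> \<le> K * \<bar>sq lo hi x n - x\<bar>"
      using assms(4) sq_props(1)[OF assms(2,3)] by blast
    then show ?thesis using ne by (simp add: abs_divide divide_le_eq)
  qed
  ultimately show ?thesis by (intro LIMSEQ_le_const2) auto
qed

lemma deriv_nonneg:
  fixes f :: "real \<Rightarrow> real"
  assumes "f differentiable (at x within {lo..hi})" "lo < hi" "x \<in> {lo..hi}"
    and "\<And>y. y \<in> {lo..hi} \<Longrightarrow> y \<noteq> x \<Longrightarrow> 0 \<le> (f y - f x) / (y - x)"
  shows "0 \<le> vector_derivative f (at x within {lo..hi})"
  using deriv_sq[OF assms(1-3)] assms(4) sq_props(1,2)[OF assms(2,3)]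
  by (intro LIMSEQ_le_const) auto

lemma deriv_const:
  fixes f :: "real \<Rightarrow> real"
  assumes "f differentiable (at x within {lo..hi})" "lo < hi" "x \<in> {lo..hi}"
    and "\<And>y. y \<in> {lo..hi} \<Longrightarrow> f y = f x"
  shows "vector_derivative f (at x within {lo..hi}) = 0"
proof -
  have "\<bar>vector_derivative f (at x within {lo..hi})\<bar> \<le> 0"
    by (rule deriv_bound[OF assms(1-3)]) (use assms(4) in auto)
  then show ?thesis by simp
qed


lemma meas_lim:
  fixes Q :: "nat \<Rightarrow> real \<Rightarrow> real"
  assumes "\<And>n. continuous_on {a..b} (Q n)" "\<And>x. x \<in> {a..b} \<Longrightarrow> (\<lambda>n. Q n x) \<longlonglongrightarrow> h x"
  shows "h \<in> borel_measurable (lebesgue_on {a..b})"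
proof (rule borel_measurable_LIMSEQ_real[where u=Q])
  show "\<And>x. x \<in> space (lebesgue_on {a..b}) \<Longrightarrow> (\<lambda>i. Q i x) \<longlonglongrightarrow> h x" using assms(2) by simp
  show "\<And>i. Q i \<in> borel_measurable (lebesgue_on {a..b})"
    using assms(1) by (intro continuous_imp_measurable_on_sets_lebesgue) auto
qed

lemma int_bounded:
  fixes f :: "real \<Rightarrow> real"
  assumes "f \<in> borel_measurable (lebesgue_on {a..b})" "\<And>x. x \<in> {a..b} \<Longrightarrow> \<bar>f x\<bar> \<le> B"
  shows "f integrable_on {a..b}"
  by (rule measurable_bounded_by_integrable_imp_integrable_real[OF assms(1) _ assms(2)]) auto

lemma int_bound:
  fixes f :: "real \<Rightarrow> real"
  assumes "f integrable_on {a..b}" "\<And>x. x \<in> {a..b} \<Longrightarrow> \<bar>f x\<bar> \<le> B" "a \<le> b"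
  shows "\<bar>integral {a..b} f\<bar> \<le> B * (b - a)"
proof -
  have "0 \<le> B" using assms(2)[of a] assms(3) by auto
  have "(f has_integral integral {a..b} f) (cbox a b)" using assms(1) by (simp add: has_integral_integral)
  from has_integral_bound[OF \<open>0 \<le> B\<close> this] assms(2) assms(3)
  show ?thesis by simp
qed

lemma dct_real:
  fixes f :: "nat \<Rightarrow> real \<Rightarrow> real"
  assumes "\<And>n. f n integrable_on {a..b}" "\<And>n x. x \<in> {a..b} \<Longrightarrow> \<bar>f n x\<bar> \<le> B"
    and "\<And>x. x \<in> {a..b} \<Longrightarrow> (\<lambda>n. f n x) \<longlonglongrightarrow> h x"
  shows "h integrable_on {a..b}" "(\<lambda>n. integral {a..b} (f n)) \<longlonglongrightarrow> integral {a..b} h"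
  using dominated_convergence[of f "{a..b}" "\<lambda>x. B" h] assms by auto

lemma avg_lim:
  fixes f :: "real \<Rightarrow> real" and u v hh :: "nat \<Rightarrow> real"
  assumes lip: "\<And>n s. s \<in> {u n..v n} \<Longrightarrow> \<bar>f s - f c\<bar> \<le> M * \<bar>s - c\<bar>" and M: "0 \<le> M"
    and int: "\<And>n. f integrable_on {u n..v n}"
    and c: "\<And>n. c \<in> {u n..v n}" and hh: "\<And>n. v n - u n = hh n" "\<And>n. hh n > 0" "hh \<longlonglongrightarrow> 0"
  shows "(\<lambda>n. integral {u n..v n} f / hh n) \<longlonglongrightarrow> f c"
proof -
  have "\<bar>integral {u n..v n} f / hh n - f c\<bar> \<le> M * hh n" for n
  proof -
    have "integral {u n..v n} f / hh n - f c = integral {u n..v n} (\<lambda>s. f s - f c) / hh n"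
    proof -
      have "integral {u n..v n} (\<lambda>s. f s - f c) = integral {u n..v n} f - integral {u n..v n} (\<lambda>s. f c)"
        using int[of n] by (intro integral_diff) auto
      also have "integral {u n..v n} (\<lambda>s. f c) = hh n * f c" using hh(1,2)[of n] by simp
      finally show ?thesis using hh(2)[of n] by (simp add: field_simps)
    qed
    moreover have "\<bar>integral {u n..v n} (\<lambda>s. f s - f c)\<bar> \<le> (M * hh n) * (v n - u n)"
    proof (rule int_bound)
      show "(\<lambda>s. f s - f c) integrable_on {u n..v n}" using int[of n] by (intro integrable_diff) auto
      fix s assume s: "s \<in> {u n..v n}"
      then have "\<bar>s - c\<bar> \<le> hh n" using c[of n] hh(1)[of n] by auto
      then show "\<bar>f s - f c\<bar> \<le> M * hh n" using lip[OF s] M by (meson mult_left_mono order_trans)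
    qed (use hh(1,2)[of n] in auto)
    ultimately show ?thesis using hh(1,2)[of n] by (simp add: abs_divide divide_le_eq)
  qed
  then have ev: "\<forall>\<^sub>F n in sequentially. norm (integral {u n..v n} f / hh n - f c) \<le> M * hh n"
    by (intro always_eventually allI) (simp only: real_norm_def)
  have "(\<lambda>n. M * hh n) \<longlonglongrightarrow> 0" using tendsto_mult_right_zero[OF hh(3)] by simp
  from Lim_null_comparison[OF ev this]
  have "(\<lambda>n. integral {u n..v n} f / hh n - f c) \<longlonglongrightarrow> 0" .
  from tendsto_add[OF this tendsto_const[of "f c"]] show ?thesis by simp
qed


locale env =
  fixes g F :: "real \<Rightarrow> real \<Rightarrow> real" and thl thh L \<delta> K2 K3 :: real
  assumes th: "thl < thh" and Lpos: "0 < L"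
    and Frange: "\<And>\<theta> l. \<theta> \<in> {thl..thh} \<Longrightarrow> F \<theta> l \<in> {0..1}"
    and Fcont: "\<And>\<theta>. \<theta> \<in> {thl..thh} \<Longrightarrow> continuous_on UNIV (F \<theta>)"
    and Flip: "\<And>\<theta> \<theta>' l. \<theta> \<in> {thl..thh} \<Longrightarrow> \<theta>' \<in> {thl..thh} \<Longrightarrow> \<bar>F \<theta> l - F \<theta>' l\<bar> \<le> K2 * \<bar>\<theta> - \<theta>'\<bar>"
    and Fdiff: "\<And>l \<theta>. \<theta> \<in> {thl..thh} \<Longrightarrow> (\<lambda>s. F s l) differentiable (at \<theta> within {thl..thh})"
    and Fmono: "\<And>l \<theta>. \<theta> \<in> {thl..thh} \<Longrightarrow> vector_derivative (\<lambda>s. F s l) (at \<theta> within {thl..thh}) \<le> 0"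
    and gmono: "\<And>\<theta>. \<theta> \<in> {thl..thh} \<Longrightarrow> mono_on {0..1} (g \<theta>)"
    and g0: "\<And>\<theta>. \<theta> \<in> {thl..thh} \<Longrightarrow> g \<theta> 0 = 0"
    and g1: "\<And>\<theta>. \<theta> \<in> {thl..thh} \<Longrightarrow> g \<theta> 1 = 1"
    and gdiff: "\<And>\<theta> t. \<theta> \<in> {thl..thh} \<Longrightarrow> t \<in> {0..1} \<Longrightarrow> g \<theta> differentiable (at t within {0..1})"
    and gbound: "\<And>\<theta> t. \<theta> \<in> {thl..thh} \<Longrightarrow> t \<in> {0..1} \<Longrightarrow> vector_derivative (g \<theta>) (at t within {0..1}) \<le> \<delta>"
    and gdiffth: "\<And>\<theta> t. \<theta> \<in> {thl..thh} \<Longrightarrow> t \<in> {0..1} \<Longrightarrow> (\<lambda>s. g s t) differentiable (at \<theta> within {thl..thh})"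
    and glip: "\<And>t \<theta> \<theta>'. t \<in> {0..1} \<Longrightarrow> \<theta> \<in> {thl..thh} \<Longrightarrow> \<theta>' \<in> {thl..thh} \<Longrightarrow> \<bar>g \<theta> t - g \<theta>' t\<bar> \<le> K3 * \<bar>\<theta> - \<theta>'\<bar>"
    and gmonoth: "\<And>\<theta> t. \<theta> \<in> {thl..thh} \<Longrightarrow> t \<in> {0<..<1} \<Longrightarrow> vector_derivative (\<lambda>s. g s t) (at \<theta> within {thl..thh}) \<le> 0"
begin

lemma K2_nonneg: "0 \<le> K2"
proof -
  have "\<bar>F thl 0 - F thh 0\<bar> \<le> K2 * \<bar>thl - thh\<bar>" using Flip[of thl thh 0] th by auto
  then have "0 \<le> K2 * \<bar>thl - thh\<bar>" by linarith
  then show ?thesis using th by (simp add: zero_le_mult_iff)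
qed

lemma K3_nonneg: "0 \<le> K3"
proof -
  have "\<bar>g thl 0 - g thh 0\<bar> \<le> K3 * \<bar>thl - thh\<bar>" using glip[of 0 thl thh] th by auto
  then have "0 \<le> K3 * \<bar>thl - thh\<bar>" by linarith
  then show ?thesis using th by (simp add: zero_le_mult_iff)
qed

lemma gd_nonneg:
  assumes "\<theta> \<in> {thl..thh}" "t \<in> {0..1}"
  shows "0 \<le> vector_derivative (g \<theta>) (at t within {0..1})"
proof (rule deriv_nonneg[OF gdiff[OF assms]])
  fix y assume y: "y \<in> {0..1::real}" "y \<noteq> t"
  show "0 \<le> (g \<theta> y - g \<theta> t) / (y - t)"
  proof (cases "y < t")
    case True
    then have "g \<theta> y \<le> g \<theta> t" using gmono[OF assms(1)] y assms(2) by (auto simp: mono_on_def)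
    then show ?thesis using True by (simp add: divide_nonpos_neg)
  next
    case False
    then have "g \<theta> t \<le> g \<theta> y" using gmono[OF assms(1)] y assms(2) by (auto simp: mono_on_def)
    then show ?thesis using False y by (simp add: divide_nonneg_pos)
  qed
qed (use assms in auto)

lemma delta_nonneg: "0 \<le> \<delta>"
  using gd_nonneg[of thl 0] gbound[of thl 0] th by force

lemma g_lipt:
  assumes "\<theta> \<in> {thl..thh}" "t \<in> {0..1}" "t' \<in> {0..1}"
  shows "\<bar>g \<theta> t - g \<theta> t'\<bar> \<le> \<delta> * \<bar>t - t'\<bar>"
proof -
  have key: "\<bar>g \<theta> b - g \<theta> a\<bar> \<le> \<delta> * \<bar>b - a\<bar>" if ab: "a \<le> b" "a \<in> {0..1}" "b \<in> {0..1}" for a b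
  proof -
    have "\<exists>x\<in>{a..b}. g \<theta> b - g \<theta> a = (\<lambda>h. h * vector_derivative (g \<theta>) (at x within {0..1})) (b - a)"
    proof (rule mvt_very_simple[OF ab(1)])
      fix x assume x: "a \<le> x" "x \<le> b"
      then have x01: "x \<in> {0..1}" using ab by auto
      have "(g \<theta> has_vector_derivative vector_derivative (g \<theta>) (at x within {0..1})) (at x within {0..1})"
        using gdiff[OF assms(1) x01] vector_derivative_works by blast
      then have "(g \<theta> has_vector_derivative vector_derivative (g \<theta>) (at x within {0..1})) (at x within {a..b})"
        by (rule has_vector_derivative_within_subset) (use ab in auto)
      then show "(g \<theta> has_derivative (\<lambda>h. h * vector_derivative (g \<theta>) (at x within {0..1}))) (at x within {a..b})"
        by (simp add: has_vector_derivative_def)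
    qed
    then obtain x where x: "x \<in> {a..b}" "g \<theta> b - g \<theta> a = (b - a) * vector_derivative (g \<theta>) (at x within {0..1})"
      by auto
    have x01: "x \<in> {0..1}" using x ab by auto
    have "0 \<le> vector_derivative (g \<theta>) (at x within {0..1})" "vector_derivative (g \<theta>) (at x within {0..1}) \<le> \<delta>"
      using gd_nonneg[OF assms(1) x01] gbound[OF assms(1) x01] by auto
    then have "0 \<le> g \<theta> b - g \<theta> a" "g \<theta> b - g \<theta> a \<le> \<delta> * (b - a)"
      using x(2) ab(1) mult_right_mono[of "vector_derivative (g \<theta>) (at x within {0..1})" \<delta> "b - a"] by (auto simp: mult.commute)
    then show ?thesis using ab(1) by simp
  qed
  show ?thesis
  proof (cases "t' \<le> t")
    case True then show ?thesis using key[of t' t] assms by auto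
  next
    case False then show ?thesis using key[of t t'] assms by (simp add: abs_minus_commute)
  qed
qed

lemma GG_lip:
  assumes "x \<in> {thl..thh}" "x' \<in> {thl..thh}" "y \<in> {thl..thh}" "y' \<in> {thl..thh}"
  shows "\<bar>g x (F y l) - g x' (F y' l)\<bar> \<le> K3 * \<bar>x - x'\<bar> + \<delta> * K2 * \<bar>y - y'\<bar>"
proof -
  have "\<bar>g x (F y l) - g x' (F y l)\<bar> \<le> K3 * \<bar>x - x'\<bar>" using glip[OF Frange[OF assms(3)] assms(1,2)] .
  moreover have "\<bar>g x' (F y l) - g x' (F y' l)\<bar> \<le> \<delta> * \<bar>F y l - F y' l\<bar>"
    using g_lipt[OF assms(2) Frange[OF assms(3)] Frange[OF assms(4)]] .
  moreover have "\<delta> * \<bar>F y l - F y' l\<bar> \<le> \<delta> * (K2 * \<bar>y - y'\<bar>)"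
    using mult_left_mono[OF Flip[OF assms(3,4), of l] delta_nonneg] .
  ultimately show ?thesis by (simp add: mult.assoc)
qed

lemma g_cont01: "\<theta> \<in> {thl..thh} \<Longrightarrow> continuous_on {0..1} (g \<theta>)"
  using gdiff differentiable_imp_continuous_within continuous_on_eq_continuous_within by blast

lemma GG_cont:
  assumes "x \<in> {thl..thh}" "y \<in> {thl..thh}"
  shows "continuous_on UNIV (\<lambda>l. g x (F y l))"
  by (rule continuous_on_compose2[OF g_cont01[OF assms(1)] Fcont[OF assms(2)]]) (use Frange assms(2) in auto)

definition dth where "dth s l = vector_derivative (\<lambda>u. g u (F s l)) (at s within {thl..thh})"
definition dFp where "dFp s l = vector_derivative (g s) (at (F s l) within {0..1}) * vector_derivative (\<lambda>u. F u l) (at s within {thl..thh})"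

lemma chain:
  assumes "s \<in> {thl..thh}"
  shows "((\<lambda>u. g s (F u l)) has_vector_derivative dFp s l) (at s within {thl..thh})"
proof -
  have f: "((\<lambda>u. F u l) has_vector_derivative vector_derivative (\<lambda>u. F u l) (at s within {thl..thh})) (at s within {thl..thh})"
    using Fdiff[OF assms] vector_derivative_works by blast
  have "(g s has_vector_derivative vector_derivative (g s) (at (F s l) within {0..1})) (at (F s l) within {0..1})"
    using gdiff[OF assms Frange[OF assms]] vector_derivative_works by blast
  then have "(g s has_vector_derivative vector_derivative (g s) (at (F s l) within {0..1})) (at (F s l) within (\<lambda>u. F u l) ` {thl..thh})"
    by (rule has_vector_derivative_within_subset) (use Frange in auto)
  from vector_diff_chain_within[OF f this] show ?thesis
    by (simp add: dFp_def comp_def mult.commute)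
qed

lemma dth_lim:
  assumes "s \<in> {thl..thh}" "y \<longlonglongrightarrow> s" "\<And>n. y n \<in> {thl..thh}" "\<And>n. y n \<noteq> s"
  shows "(\<lambda>n. (g (y n) (F s l) - g s (F s l)) / (y n - s)) \<longlonglongrightarrow> dth s l"
  unfolding dth_def using deriv_seq[OF gdiffth[OF assms(1) Frange[OF assms(1)]] assms(2-4)] .

lemma dFp_lim:
  assumes "s \<in> {thl..thh}" "y \<longlonglongrightarrow> s" "\<And>n. y n \<in> {thl..thh}" "\<And>n. y n \<noteq> s"
  shows "(\<lambda>n. (g s (F (y n) l) - g s (F s l)) / (y n - s)) \<longlonglongrightarrow> dFp s l"
proof -
  have d: "(\<lambda>u. g s (F u l)) differentiable (at s within {thl..thh})"
    using chain[OF assms(1)] differentiable_def has_vector_derivative_def by blast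
  have "vector_derivative (\<lambda>u. g s (F u l)) (at s within {thl..thh}) = dFp s l"
    using vector_derivative_within_closed_interval[OF th assms(1) chain[OF assms(1)]] .
  with deriv_seq[OF d assms(2-4)] show ?thesis by simp
qed

lemma dth_bound: "s \<in> {thl..thh} \<Longrightarrow> \<bar>dth s l\<bar> \<le> K3"
  unfolding dth_def
  by (rule deriv_bound[OF gdiffth[OF _ Frange] th]) (use glip[OF Frange] in auto)

lemma dFp_bound:
  assumes "s \<in> {thl..thh}" shows "\<bar>dFp s l\<bar> \<le> \<delta> * K2"
proof -
  have d: "(\<lambda>u. g s (F u l)) differentiable (at s within {thl..thh})"
    using chain[OF assms(1)] differentiable_def has_vector_derivative_def by blast
  have "vector_derivative (\<lambda>u. g s (F u l)) (at s within {thl..thh}) = dFp s l"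
    using vector_derivative_within_closed_interval[OF th assms(1) chain[OF assms(1)]] .
  moreover have "\<bar>vector_derivative (\<lambda>u. g s (F u l)) (at s within {thl..thh})\<bar> \<le> \<delta> * K2"
  proof (rule deriv_bound[OF d th assms])
    fix y assume y: "y \<in> {thl..thh}"
    have "\<bar>g s (F y l) - g s (F s l)\<bar> \<le> \<delta> * \<bar>F y l - F s l\<bar>" using g_lipt[OF assms Frange[OF y] Frange[OF assms]] .
    also have "\<dots> \<le> \<delta> * (K2 * \<bar>y - s\<bar>)" using mult_left_mono[OF Flip[OF y assms, of l] delta_nonneg] .
    finally show "\<bar>g s (F y l) - g s (F s l)\<bar> \<le> \<delta> * K2 * \<bar>y - s\<bar>" by (simp add: mult.assoc)
  qed
  ultimately show ?thesis by simp
qed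

lemma dth_nonpos:
  assumes "s \<in> {thl..thh}" shows "dth s l \<le> 0"
proof (cases "F s l \<in> {0<..<1}")
  case True then show ?thesis unfolding dth_def using gmonoth[OF assms] by blast
next
  case False
  then have "F s l = 0 \<or> F s l = 1" using Frange[OF assms, of l] by auto
  then have c: "\<And>y. y \<in> {thl..thh} \<Longrightarrow> g y (F s l) = g s (F s l)" using g0 g1 assms by auto
  have "dth s l = 0" unfolding dth_def
    by (rule deriv_const[OF gdiffth[OF assms Frange[OF assms]] th assms]) (use c in auto)
  then show ?thesis by simp
qed

lemma dFp_nonpos:
  assumes "s \<in> {thl..thh}" shows "dFp s l \<le> 0"
  unfolding dFp_def using gd_nonneg[OF assms Frange[OF assms]] Fmono[OF assms]
  by (simp add: mult_nonneg_nonpos)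

lemma dth_meas:
  assumes "s \<in> {thl..thh}"
  shows "(\<lambda>l. dth s l) \<in> borel_measurable (lebesgue_on {a..b})"
proof (rule meas_lim)
  let ?y = "sq thl thh s"
  show "continuous_on {a..b} (\<lambda>l. (g (?y n) (F s l) - g s (F s l)) / (?y n - s))" for n
  proof -
    have "continuous_on UNIV (\<lambda>l. (g (?y n) (F s l) - g s (F s l)) / (?y n - s))"
      using GG_cont[OF sq_props(1)[OF th assms] assms] GG_cont[OF assms assms] sq_props(2)[OF th assms]
      by (intro continuous_on_divide continuous_on_diff continuous_on_const) auto
    then show ?thesis by (rule continuous_on_subset) auto
  qed
  show "(\<lambda>n. (g (?y n) (F s l) - g s (F s l)) / (?y n - s)) \<longlonglongrightarrow> dth s l" for l
    by (rule dth_lim[OF assms sq_props(3)[OF th assms] sq_props(1,2)[OF th assms]])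
qed

lemma dFp_meas:
  assumes "s \<in> {thl..thh}"
  shows "(\<lambda>l. dFp s l) \<in> borel_measurable (lebesgue_on {a..b})"
proof (rule meas_lim)
  let ?y = "sq thl thh s"
  show "continuous_on {a..b} (\<lambda>l. (g s (F (?y n) l) - g s (F s l)) / (?y n - s))" for n
  proof -
    have "continuous_on UNIV (\<lambda>l. (g s (F (?y n) l) - g s (F s l)) / (?y n - s))"
      using GG_cont[OF assms sq_props(1)[OF th assms]] GG_cont[OF assms assms] sq_props(2)[OF th assms]
      by (intro continuous_on_divide continuous_on_diff continuous_on_const) auto
    then show ?thesis by (rule continuous_on_subset) auto
  qed
  show "(\<lambda>n. (g s (F (?y n) l) - g s (F s l)) / (?y n - s)) \<longlonglongrightarrow> dFp s l" for l
    by (rule dFp_lim[OF assms sq_props(3)[OF th assms] sq_props(1,2)[OF th assms]])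
qed

end

lemma lip_cont:
  fixes f :: "real \<Rightarrow> real"
  assumes "\<And>x y. x \<in> T \<Longrightarrow> y \<in> T \<Longrightarrow> \<bar>f x - f y\<bar> \<le> M * \<bar>x - y\<bar>"
  shows "continuous_on T f"
proof -
  have M: "\<And>x y. x \<in> T \<Longrightarrow> y \<in> T \<Longrightarrow> \<bar>f x - f y\<bar> \<le> (\<bar>M\<bar> + 1) * \<bar>x - y\<bar>"
  proof -
    fix x y assume "x \<in> T" "y \<in> T"
    have "M * \<bar>x - y\<bar> \<le> (\<bar>M\<bar> + 1) * \<bar>x - y\<bar>" by (intro mult_right_mono) auto
    then show "\<bar>f x - f y\<bar> \<le> (\<bar>M\<bar> + 1) * \<bar>x - y\<bar>" using assms[OF \<open>x \<in> T\<close> \<open>y \<in> T\<close>] by linarith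
  qed
  show ?thesis unfolding continuous_on_iff
  proof (intro ballI allI impI)
    fix x e assume x: "x \<in> T" and e: "(0::real) < e"
    let ?d = "e / (\<bar>M\<bar> + 1)"
    have d: "0 < ?d" using e by simp
    have "dist (f x') (f x) < e" if "x' \<in> T" "dist x' x < ?d" for x'
    proof -
      have "\<bar>f x' - f x\<bar> \<le> (\<bar>M\<bar> + 1) * \<bar>x' - x\<bar>" using M[OF that(1) x] .
      also have "\<dots> < (\<bar>M\<bar> + 1) * ?d" using that(2) by (intro mult_strict_left_mono) (auto simp: dist_real_def)
      also have "\<dots> = e" by simp
      finally show ?thesis by (simp add: dist_real_def)
    qed
    then show "\<exists>d>0. \<forall>x'\<in>T. dist x' x < d \<longrightarrow> dist (f x') (f x) < e" using d by blast
  qed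
qed

context env begin

lemma g_range:
  assumes "\<theta> \<in> {thl..thh}" "t \<in> {0..1}" shows "g \<theta> t \<in> {0..1}"
  using gmono[OF assms(1)] assms g0[OF assms(1)] g1[OF assms(1)]
  by (auto simp: mono_on_def) (metis atLeastAtMost_iff order.refl zero_le_one)+

lemma kr_meas:
  fixes k r :: "real \<Rightarrow> real"
  assumes "continuous_on {0..L} k" "r \<in> borel_measurable (lebesgue_on {0..L})"
  shows "(\<lambda>l. k l * r l) \<in> borel_measurable (lebesgue_on {0..L})"
proof -
  have "k \<in> borel_measurable (lebesgue_on {0..L})"
    by (rule continuous_imp_measurable_on_sets_lebesgue[OF assms(1)]) auto
  then show ?thesis using assms(2) by (rule borel_measurable_times)
qed

lemma kr_int:
  fixes k r :: "real \<Rightarrow> real"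
  assumes "continuous_on {0..L} k" "r \<in> borel_measurable (lebesgue_on {0..L})"
    and "\<And>l. l \<in> {0..L} \<Longrightarrow> \<bar>k l\<bar> \<le> B" "\<And>l. l \<in> {0..L} \<Longrightarrow> \<bar>r l\<bar> \<le> 1"
  shows "(\<lambda>l. k l * r l) integrable_on {0..L}"
proof (rule int_bounded)
  show "(\<lambda>l. k l * r l) \<in> borel_measurable (lebesgue_on {0..L})" by (rule kr_meas[OF assms(1,2)])
  fix l assume l: "l \<in> {0..L}"
  have "\<bar>k l * r l\<bar> = \<bar>k l\<bar> * \<bar>r l\<bar>" by (simp add: abs_mult)
  also have "\<dots> \<le> B * 1" using assms(3,4)[OF l] by (intro mult_mono) auto
  finally show "\<bar>k l * r l\<bar> \<le> B" by simp
qed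

lemma kr_bound:
  fixes k r :: "real \<Rightarrow> real"
  assumes "(\<lambda>l. k l * r l) integrable_on {0..L}"
    and "\<And>l. l \<in> {0..L} \<Longrightarrow> \<bar>k l\<bar> \<le> B" "\<And>l. l \<in> {0..L} \<Longrightarrow> \<bar>r l\<bar> \<le> 1"
  shows "\<bar>integral {0..L} (\<lambda>l. k l * r l)\<bar> \<le> B * L"
proof -
  have "\<bar>integral {0..L} (\<lambda>l. k l * r l)\<bar> \<le> B * (L - 0)"
  proof (rule int_bound[OF assms(1)])
    fix l assume l: "l \<in> {0..L}"
    have "\<bar>k l * r l\<bar> = \<bar>k l\<bar> * \<bar>r l\<bar>" by (simp add: abs_mult)
    also have "\<dots> \<le> B * 1" using assms(2,3)[OF l] by (intro mult_mono) auto
    finally show "\<bar>k l * r l\<bar> \<le> B" by simp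
  qed (use Lpos in auto)
  then show ?thesis by simp
qed

lemma GG_contL: "x \<in> {thl..thh} \<Longrightarrow> y \<in> {thl..thh} \<Longrightarrow> continuous_on {0..L} (\<lambda>l. g x (F y l))"
  using GG_cont continuous_on_subset by blast

lemma GGr_int:
  assumes "x \<in> {thl..thh}" "y \<in> {thl..thh}" "r \<in> borel_measurable (lebesgue_on {0..L})" "\<And>l. l \<in> {0..L} \<Longrightarrow> \<bar>r l\<bar> \<le> 1"
  shows "(\<lambda>l. g x (F y l) * r l) integrable_on {0..L}"
  by (rule kr_int[OF GG_contL[OF assms(1,2)] assms(3) _ assms(4), of 1])
     (use g_range[OF assms(1) Frange[OF assms(2)]] in auto)

lemma Dr_int:
  assumes "s \<in> {thl..thh}" "r \<in> borel_measurable (lebesgue_on {0..L})" "\<And>l. l \<in> {0..L} \<Longrightarrow> \<bar>r l\<bar> \<le> 1"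
  shows "(\<lambda>l. dth s l * r l) integrable_on {0..L}" "(\<lambda>l. dFp s l * r l) integrable_on {0..L}"
proof -
  show "(\<lambda>l. dth s l * r l) integrable_on {0..L}"
  proof (rule int_bounded)
    show "(\<lambda>l. dth s l * r l) \<in> borel_measurable (lebesgue_on {0..L})"
      using dth_meas[OF assms(1)] assms(2) by (intro borel_measurable_times)
    fix l assume l: "l \<in> {0..L}"
    have "\<bar>dth s l * r l\<bar> = \<bar>dth s l\<bar> * \<bar>r l\<bar>" by (simp add: abs_mult)
    also have "\<dots> \<le> K3 * 1" using dth_bound[OF assms(1)] assms(3)[OF l] K3_nonneg by (intro mult_mono) auto
    finally show "\<bar>dth s l * r l\<bar> \<le> K3" by simp
  qed
  show "(\<lambda>l. dFp s l * r l) integrable_on {0..L}"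
  proof (rule int_bounded)
    show "(\<lambda>l. dFp s l * r l) \<in> borel_measurable (lebesgue_on {0..L})"
      using dFp_meas[OF assms(1)] assms(2) by (intro borel_measurable_times)
    fix l assume l: "l \<in> {0..L}"
    have "\<bar>dFp s l * r l\<bar> = \<bar>dFp s l\<bar> * \<bar>r l\<bar>" by (simp add: abs_mult)
    also have "\<dots> \<le> (\<delta> * K2) * 1" using dFp_bound[OF assms(1)] assms(3)[OF l] K2_nonneg delta_nonneg by (intro mult_mono) auto
    finally show "\<bar>dFp s l * r l\<bar> \<le> \<delta> * K2" by simp
  qed
qed

end

locale envr = env +
  fixes r :: "real \<Rightarrow> real"
  assumes rm: "r \<in> borel_measurable (lebesgue_on {0..L})"
    and rb: "\<And>l. l \<in> {0..L} \<Longrightarrow> \<bar>r l\<bar> \<le> 1"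
begin

definition Wg where "Wg s = integral {0..L} (\<lambda>l. g s (F s l) * r l)"
definition Aq where "Aq h \<sigma> = integral {0..L} (\<lambda>l. (g \<sigma> (F \<sigma> l) - g (\<sigma> - h) (F \<sigma> l)) / h * r l)"
definition Bq where "Bq h s = integral {0..L} (\<lambda>l. (g s (F (s + h) l) - g s (F s l)) / h * r l)"

lemma cont_kr_int:
  assumes "continuous_on {0..L} k"
  shows "(\<lambda>l. k l * r l) integrable_on {0..L}"
proof -
  have "compact (k ` {0..L})" by (rule compact_continuous_image[OF assms]) simp
  then obtain B where "\<forall>x\<in>k ` {0..L}. norm x \<le> B" using compact_imp_bounded bounded_iff by metis
  then have "\<And>l. l \<in> {0..L} \<Longrightarrow> \<bar>k l\<bar> \<le> B" by auto
  then show ?thesis using kr_int[OF assms rm _ rb] by blast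
qed

lemma kr_diff:
  assumes "continuous_on {0..L} k1" "continuous_on {0..L} k2" "\<And>l. l \<in> {0..L} \<Longrightarrow> \<bar>k1 l - k2 l\<bar> \<le> B"
  shows "\<bar>integral {0..L} (\<lambda>l. k1 l * r l) - integral {0..L} (\<lambda>l. k2 l * r l)\<bar> \<le> B * L"
proof -
  have "integral {0..L} (\<lambda>l. k1 l * r l) - integral {0..L} (\<lambda>l. k2 l * r l)
      = integral {0..L} (\<lambda>l. (k1 l - k2 l) * r l)"
    using cont_kr_int[OF assms(1)] cont_kr_int[OF assms(2)]
    by (subst integral_diff[symmetric]) (auto simp: algebra_simps)
  also have "\<bar>\<dots>\<bar> \<le> B * L"
    by (rule kr_bound[OF cont_kr_int _ rb]) (use assms in \<open>auto intro: continuous_on_diff\<close>)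
  finally show ?thesis .
qed

abbreviation "CC \<equiv> K3 + \<delta> * K2"

lemma CC_nonneg: "0 \<le> CC" using K3_nonneg K2_nonneg delta_nonneg by simp

lemma GG_lipC:
  assumes "x \<in> {thl..thh}" "x' \<in> {thl..thh}"
  shows "\<bar>g x (F x l) - g x' (F x' l)\<bar> \<le> CC * \<bar>x - x'\<bar>"
  using GG_lip[OF assms assms, of l] by (simp add: algebra_simps)

lemma Wg_lip:
  assumes "s \<in> {thl..thh}" "s' \<in> {thl..thh}"
  shows "\<bar>Wg s - Wg s'\<bar> \<le> (CC * L) * \<bar>s - s'\<bar>"
proof -
  have "\<bar>Wg s - Wg s'\<bar> \<le> (CC * \<bar>s - s'\<bar>) * L"
    unfolding Wg_def by (rule kr_diff[OF GG_contL[OF assms(1,1)] GG_contL[OF assms(2,2)] GG_lipC[OF assms]])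
  then show ?thesis by (simp add: algebra_simps)
qed

lemma Wg_cont: "continuous_on {thl..thh} Wg"
  by (rule lip_cont[of _ _ "CC * L"]) (rule Wg_lip)

lemma Aq_bound:
  assumes "\<sigma> \<in> {thl..thh}" "\<sigma> - h \<in> {thl..thh}" "h > 0"
  shows "\<bar>Aq h \<sigma>\<bar> \<le> K3 * L"
  unfolding Aq_def
proof (rule kr_bound[OF cont_kr_int _ rb])
  show "continuous_on {0..L} (\<lambda>l. (g \<sigma> (F \<sigma> l) - g (\<sigma> - h) (F \<sigma> l)) / h)"
    using GG_contL[OF assms(1,1)] GG_contL[OF assms(2,1)] by (intro continuous_on_divide continuous_on_diff continuous_on_const) (use assms in auto)
  fix l
  have "\<bar>g \<sigma> (F \<sigma> l) - g (\<sigma> - h) (F \<sigma> l)\<bar> \<le> K3 * \<bar>\<sigma> - (\<sigma> - h)\<bar>"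
    using glip[OF Frange[OF assms(1)] assms(1,2)] .
  then show "\<bar>(g \<sigma> (F \<sigma> l) - g (\<sigma> - h) (F \<sigma> l)) / h\<bar> \<le> K3"
    using assms(3) by (simp add: abs_divide divide_le_eq)
qed

lemma Bq_bound:
  assumes "s \<in> {thl..thh}" "s + h \<in> {thl..thh}" "h > 0"
  shows "\<bar>Bq h s\<bar> \<le> (\<delta> * K2) * L"
  unfolding Bq_def
proof (rule kr_bound[OF cont_kr_int _ rb])
  show "continuous_on {0..L} (\<lambda>l. (g s (F (s + h) l) - g s (F s l)) / h)"
    using GG_contL[OF assms(1,2)] GG_contL[OF assms(1,1)] by (intro continuous_on_divide continuous_on_diff continuous_on_const) (use assms in auto)
  fix l
  have "\<bar>g s (F (s + h) l) - g s (F s l)\<bar> \<le> K3 * \<bar>s - s\<bar> + \<delta> * K2 * \<bar>(s + h) - s\<bar>"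
    using GG_lip[OF assms(1,1,2,1)] .
  then show "\<bar>(g s (F (s + h) l) - g s (F s l)) / h\<bar> \<le> \<delta> * K2"
    using assms(3) by (simp add: abs_divide divide_le_eq)
qed

lemma Aq_lip:
  assumes "\<sigma> \<in> {thl..thh}" "\<sigma> - h \<in> {thl..thh}" "\<sigma>' \<in> {thl..thh}" "\<sigma>' - h \<in> {thl..thh}" "h > 0"
  shows "\<bar>Aq h \<sigma> - Aq h \<sigma>'\<bar> \<le> (2 * CC * L / h) * \<bar>\<sigma> - \<sigma>'\<bar>"
proof -
  have "\<bar>Aq h \<sigma> - Aq h \<sigma>'\<bar> \<le> (2 * CC * \<bar>\<sigma> - \<sigma>'\<bar> / h) * L"
    unfolding Aq_def
  proof (rule kr_diff)
    show "continuous_on {0..L} (\<lambda>l. (g \<sigma> (F \<sigma> l) - g (\<sigma> - h) (F \<sigma> l)) / h)"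
      using GG_contL[OF assms(1,1)] GG_contL[OF assms(2,1)] by (intro continuous_on_divide continuous_on_diff continuous_on_const) (use assms in auto)
    show "continuous_on {0..L} (\<lambda>l. (g \<sigma>' (F \<sigma>' l) - g (\<sigma>' - h) (F \<sigma>' l)) / h)"
      using GG_contL[OF assms(3,3)] GG_contL[OF assms(4,3)] by (intro continuous_on_divide continuous_on_diff continuous_on_const) (use assms in auto)
    fix l
    have 1: "\<bar>g \<sigma> (F \<sigma> l) - g \<sigma>' (F \<sigma>' l)\<bar> \<le> CC * \<bar>\<sigma> - \<sigma>'\<bar>" using GG_lipC[OF assms(1,3)] .
    have 2: "\<bar>g (\<sigma> - h) (F \<sigma> l) - g (\<sigma>' - h) (F \<sigma>' l)\<bar> \<le> K3 * \<bar>(\<sigma> - h) - (\<sigma>' - h)\<bar> + \<delta> * K2 * \<bar>\<sigma> - \<sigma>'\<bar>"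
      using GG_lip[OF assms(2,4,1,3)] .
    have "\<bar>(g \<sigma> (F \<sigma> l) - g (\<sigma> - h) (F \<sigma> l)) / h - (g \<sigma>' (F \<sigma>' l) - g (\<sigma>' - h) (F \<sigma>' l)) / h\<bar>
        = \<bar>(g \<sigma> (F \<sigma> l) - g \<sigma>' (F \<sigma>' l)) - (g (\<sigma> - h) (F \<sigma> l) - g (\<sigma>' - h) (F \<sigma>' l))\<bar> / h"
      using assms(5) by (simp add: diff_divide_distrib[symmetric] abs_divide algebra_simps)
    also have "\<dots> \<le> 2 * CC * \<bar>\<sigma> - \<sigma>'\<bar> / h"
      using 1 2 assms(5) by (intro divide_right_mono) (auto simp: algebra_simps)
    finally show "\<bar>(g \<sigma> (F \<sigma> l) - g (\<sigma> - h) (F \<sigma> l)) / h - (g \<sigma>' (F \<sigma>' l) - g (\<sigma>' - h) (F \<sigma>' l)) / h\<bar> \<le> 2 * CC * \<bar>\<sigma> - \<sigma>'\<bar> / h" .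
  qed
  then show ?thesis by (simp add: algebra_simps)
qed

lemma Bq_lip:
  assumes "s \<in> {thl..thh}" "s + h \<in> {thl..thh}" "s' \<in> {thl..thh}" "s' + h \<in> {thl..thh}" "h > 0"
  shows "\<bar>Bq h s - Bq h s'\<bar> \<le> (2 * CC * L / h) * \<bar>s - s'\<bar>"
proof -
  have "\<bar>Bq h s - Bq h s'\<bar> \<le> (2 * CC * \<bar>s - s'\<bar> / h) * L"
    unfolding Bq_def
  proof (rule kr_diff)
    show "continuous_on {0..L} (\<lambda>l. (g s (F (s + h) l) - g s (F s l)) / h)"
      using GG_contL[OF assms(1,2)] GG_contL[OF assms(1,1)] by (intro continuous_on_divide continuous_on_diff continuous_on_const) (use assms in auto)
    show "continuous_on {0..L} (\<lambda>l. (g s' (F (s' + h) l) - g s' (F s' l)) / h)"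
      using GG_contL[OF assms(3,4)] GG_contL[OF assms(3,3)] by (intro continuous_on_divide continuous_on_diff continuous_on_const) (use assms in auto)
    fix l
    have 1: "\<bar>g s (F (s + h) l) - g s' (F (s' + h) l)\<bar> \<le> K3 * \<bar>s - s'\<bar> + \<delta> * K2 * \<bar>(s + h) - (s' + h)\<bar>"
      using GG_lip[OF assms(1,3,2,4)] .
    have 2: "\<bar>g s (F s l) - g s' (F s' l)\<bar> \<le> CC * \<bar>s - s'\<bar>" using GG_lipC[OF assms(1,3)] .
    have "\<bar>(g s (F (s + h) l) - g s (F s l)) / h - (g s' (F (s' + h) l) - g s' (F s' l)) / h\<bar>
        = \<bar>(g s (F (s + h) l) - g s' (F (s' + h) l)) - (g s (F s l) - g s' (F s' l))\<bar> / h"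
      using assms(5) by (simp add: diff_divide_distrib[symmetric] abs_divide algebra_simps)
    also have "\<dots> \<le> 2 * CC * \<bar>s - s'\<bar> / h"
      using 1 2 assms(5) by (intro divide_right_mono) (auto simp: algebra_simps)
    finally show "\<bar>(g s (F (s + h) l) - g s (F s l)) / h - (g s' (F (s' + h) l) - g s' (F s' l)) / h\<bar> \<le> 2 * CC * \<bar>s - s'\<bar> / h" .
  qed
  then show ?thesis by (simp add: algebra_simps)
qed

end

context envr begin

lemma ident:
  assumes "s \<in> {thl..thh}" "s + h \<in> {thl..thh}" "h > 0"
  shows "(Wg (s + h) - Wg s) / h = Aq h (s + h) + Bq h s"
proof -
  have c1: "continuous_on {0..L} (\<lambda>l. (g (s + h) (F (s + h) l) - g s (F (s + h) l)) / h)"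
    using GG_contL[OF assms(2,2)] GG_contL[OF assms(1,2)] by (intro continuous_on_divide continuous_on_diff continuous_on_const) (use assms in auto)
  have c2: "continuous_on {0..L} (\<lambda>l. (g s (F (s + h) l) - g s (F s l)) / h)"
    using GG_contL[OF assms(1,2)] GG_contL[OF assms(1,1)] by (intro continuous_on_divide continuous_on_diff continuous_on_const) (use assms in auto)
  have "Aq h (s + h) + Bq h s = integral {0..L} (\<lambda>l. (g (s + h) (F (s + h) l) - g s (F (s + h) l)) / h * r l
           + (g s (F (s + h) l) - g s (F s l)) / h * r l)"
    unfolding Aq_def Bq_def using cont_kr_int[OF c1] cont_kr_int[OF c2] by (simp add: integral_add)
  also have "\<dots> = integral {0..L} (\<lambda>l. (g (s + h) (F (s + h) l) * r l - g s (F s l) * r l) / h)"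
    using assms(3) by (intro integral_cong) (simp add: field_simps)
  also have "\<dots> = (integral {0..L} (\<lambda>l. g (s + h) (F (s + h) l) * r l) - integral {0..L} (\<lambda>l. g s (F s l) * r l)) / h"
    using cont_kr_int[OF GG_contL[OF assms(2,2)]] cont_kr_int[OF GG_contL[OF assms(1,1)]]
    by (simp add: integral_diff)
  finally show ?thesis unfolding Wg_def by simp
qed

lemma Aq_conv:
  assumes "\<sigma> \<in> {thl..thh}" "hh \<longlonglongrightarrow> 0" "\<And>n. hh n > 0" "\<And>n. \<sigma> - hh n \<in> {thl..thh}"
  shows "(\<lambda>n. Aq (hh n) \<sigma>) \<longlonglongrightarrow> integral {0..L} (\<lambda>l. dth \<sigma> l * r l)"
  unfolding Aq_def
proof (rule dct_real(2))
  fix n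
  have c: "continuous_on {0..L} (\<lambda>l. (g \<sigma> (F \<sigma> l) - g (\<sigma> - hh n) (F \<sigma> l)) / hh n)"
    using GG_contL[OF assms(1,1)] GG_contL[OF assms(4) assms(1)] assms(3)[of n]
    by (intro continuous_on_divide continuous_on_diff continuous_on_const) auto
  show "(\<lambda>l. (g \<sigma> (F \<sigma> l) - g (\<sigma> - hh n) (F \<sigma> l)) / hh n * r l) integrable_on {0..L}"
    by (rule cont_kr_int[OF c])
  fix l assume l: "l \<in> {0..L}"
  have "\<bar>g \<sigma> (F \<sigma> l) - g (\<sigma> - hh n) (F \<sigma> l)\<bar> \<le> K3 * \<bar>\<sigma> - (\<sigma> - hh n)\<bar>"
    using glip[OF Frange[OF assms(1)] assms(1) assms(4)] .
  then have "\<bar>(g \<sigma> (F \<sigma> l) - g (\<sigma> - hh n) (F \<sigma> l)) / hh n\<bar> \<le> K3"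
    using assms(3)[of n] by (simp add: abs_divide divide_le_eq)
  then have "\<bar>(g \<sigma> (F \<sigma> l) - g (\<sigma> - hh n) (F \<sigma> l)) / hh n\<bar> * \<bar>r l\<bar> \<le> K3 * 1"
    using rb[OF l] K3_nonneg by (intro mult_mono) auto
  then show "\<bar>(g \<sigma> (F \<sigma> l) - g (\<sigma> - hh n) (F \<sigma> l)) / hh n * r l\<bar> \<le> K3"
    by (simp only: abs_mult mult_1_right)
next
  fix l assume l: "l \<in> {0..L}"
  have y: "(\<lambda>n. \<sigma> - hh n) \<longlonglongrightarrow> \<sigma>" using tendsto_diff[OF tendsto_const assms(2), of \<sigma>] by simp
  have "(\<lambda>n. (g (\<sigma> - hh n) (F \<sigma> l) - g \<sigma> (F \<sigma> l)) / ((\<sigma> - hh n) - \<sigma>)) \<longlonglongrightarrow> dth \<sigma> l"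
    by (rule dth_lim[OF assms(1) y assms(4)]) (use assms(3) in \<open>auto simp: less_le\<close>)
  moreover have "(g (\<sigma> - hh n) (F \<sigma> l) - g \<sigma> (F \<sigma> l)) / ((\<sigma> - hh n) - \<sigma>) = (g \<sigma> (F \<sigma> l) - g (\<sigma> - hh n) (F \<sigma> l)) / hh n" for n
    using assms(3)[of n] by (simp add: field_simps)
  ultimately have "(\<lambda>n. (g \<sigma> (F \<sigma> l) - g (\<sigma> - hh n) (F \<sigma> l)) / hh n) \<longlonglongrightarrow> dth \<sigma> l" by simp
  then show "(\<lambda>n. (g \<sigma> (F \<sigma> l) - g (\<sigma> - hh n) (F \<sigma> l)) / hh n * r l) \<longlonglongrightarrow> dth \<sigma> l * r l"
    by (rule tendsto_mult_right)
qed

lemma Bq_conv: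
  assumes "s \<in> {thl..thh}" "hh \<longlonglongrightarrow> 0" "\<And>n. hh n > 0" "\<And>n. s + hh n \<in> {thl..thh}"
  shows "(\<lambda>n. Bq (hh n) s) \<longlonglongrightarrow> integral {0..L} (\<lambda>l. dFp s l * r l)"
  unfolding Bq_def
proof (rule dct_real(2))
  fix n
  have c: "continuous_on {0..L} (\<lambda>l. (g s (F (s + hh n) l) - g s (F s l)) / hh n)"
    using GG_contL[OF assms(1) assms(4)] GG_contL[OF assms(1,1)] assms(3)[of n]
    by (intro continuous_on_divide continuous_on_diff continuous_on_const) auto
  show "(\<lambda>l. (g s (F (s + hh n) l) - g s (F s l)) / hh n * r l) integrable_on {0..L}"
    by (rule cont_kr_int[OF c])
  fix l assume l: "l \<in> {0..L}"
  have "\<bar>g s (F (s + hh n) l) - g s (F s l)\<bar> \<le> K3 * \<bar>s - s\<bar> + \<delta> * K2 * \<bar>(s + hh n) - s\<bar>"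
    using GG_lip[OF assms(1,1) assms(4) assms(1)] .
  then have "\<bar>(g s (F (s + hh n) l) - g s (F s l)) / hh n\<bar> \<le> \<delta> * K2"
    using assms(3)[of n] by (simp add: abs_divide divide_le_eq)
  then have "\<bar>(g s (F (s + hh n) l) - g s (F s l)) / hh n\<bar> * \<bar>r l\<bar> \<le> (\<delta> * K2) * 1"
    using rb[OF l] K2_nonneg delta_nonneg by (intro mult_mono) auto
  then show "\<bar>(g s (F (s + hh n) l) - g s (F s l)) / hh n * r l\<bar> \<le> \<delta> * K2"
    by (simp only: abs_mult mult_1_right)
next
  fix l assume l: "l \<in> {0..L}"
  have y: "(\<lambda>n. s + hh n) \<longlonglongrightarrow> s" using tendsto_add[OF tendsto_const assms(2), of s] by simp
  have "(\<lambda>n. (g s (F (s + hh n) l) - g s (F s l)) / ((s + hh n) - s)) \<longlonglongrightarrow> dFp s l"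
    by (rule dFp_lim[OF assms(1) y assms(4)]) (use assms(3) in \<open>auto simp: less_le\<close>)
  then have "(\<lambda>n. (g s (F (s + hh n) l) - g s (F s l)) / hh n) \<longlonglongrightarrow> dFp s l" by simp
  then show "(\<lambda>n. (g s (F (s + hh n) l) - g s (F s l)) / hh n * r l) \<longlonglongrightarrow> dFp s l * r l"
    by (rule tendsto_mult_right)
qed

end

context envr begin

lemma Phi:
  assumes a: "a \<in> {thl..thh}" and b: "b \<in> {thl..thh}" and ab: "a < b"
  shows "((\<lambda>s. integral {0..L} (\<lambda>l. (dth s l + dFp s l) * r l)) has_integral (Wg b - Wg a)) {a..b}"
proof -
  define hs where "hs n = (b - a) / (real n + 2)" for n
  have hs_pos: "hs n > 0" for n using ab by (simp add: hs_def)
  have hs_le: "hs n \<le> (b - a) / 2" for n using ab unfolding hs_def by (intro divide_left_mono) auto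
  have hs_lt: "hs n < b - a" for n using hs_le[of n] ab by (simp add: field_simps)
  have hs_lim: "hs \<longlonglongrightarrow> 0"
  proof -
    have "(\<lambda>n. (b - a) / real (n + 2)) \<longlonglongrightarrow> 0"
      using LIMSEQ_ignore_initial_segment[OF lim_const_over_n[of "b - a"], of 2] by simp
    then show ?thesis unfolding hs_def by (simp add: add.commute)
  qed
  have hs_mono: "hs n \<le> hs m" if "m \<le> n" for m n
    unfolding hs_def using ab that by (intro divide_left_mono) auto
  have sub: "{a..b} \<subseteq> {thl..thh}" using a b by auto
  define A where "A \<sigma> = integral {0..L} (\<lambda>l. dth \<sigma> l * r l)" for \<sigma>
  define B where "B s = integral {0..L} (\<lambda>l. dFp s l * r l)" for s
  define fA where "fA n \<sigma> = (if \<sigma> \<in> {a + hs n..b} then Aq (hs n) \<sigma> else 0)" for n \<sigma>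
  define fB where "fB n s = (if s \<in> {a..b - hs n} then Bq (hs n) s else 0)" for n s
  define gA where "gA \<sigma> = (if \<sigma> = a then 0 else A \<sigma>)" for \<sigma>
  define gB where "gB s = (if s = b then 0 else B s)" for s
  define RH where "RH n = (integral {b - hs n..b} Wg - integral {a..a + hs n} Wg) / hs n" for n

  have Aq_cont: "continuous_on {a + hs n..b} (Aq (hs n))" for n
  proof (rule lip_cont[of _ _ "2 * CC * L / hs n"])
    fix x y assume "x \<in> {a + hs n..b}" "y \<in> {a + hs n..b}"
    then show "\<bar>Aq (hs n) x - Aq (hs n) y\<bar> \<le> 2 * CC * L / hs n * \<bar>x - y\<bar>"
      using sub hs_pos[of n] by (intro Aq_lip) auto
  qed
  have Bq_cont: "continuous_on {a..b - hs n} (Bq (hs n))" for n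
  proof (rule lip_cont[of _ _ "2 * CC * L / hs n"])
    fix x y assume "x \<in> {a..b - hs n}" "y \<in> {a..b - hs n}"
    then show "\<bar>Bq (hs n) x - Bq (hs n) y\<bar> \<le> 2 * CC * L / hs n * \<bar>x - y\<bar>"
      using sub hs_pos[of n] by (intro Bq_lip) auto
  qed
  have Wg_int: "Wg integrable_on {u..v}" if "{u..v} \<subseteq> {thl..thh}" for u v
    using integrable_continuous_interval continuous_on_subset[OF Wg_cont that] by blast

  have key: "integral {a..b} (fA n) + integral {a..b} (fB n) = RH n" for n
  proof -
    let ?h = "hs n"
    have h0: "?h > 0" using hs_pos .
    have e1: "integral {a..b} (fA n) = integral {a + ?h..b} (Aq ?h)"
    proof -
      have "integral {a..b} (fA n) = integral ({a + ?h..b} \<inter> {a..b}) (Aq ?h)"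
        unfolding fA_def by (rule integral_restrict_Int)
      also have "{a + ?h..b} \<inter> {a..b} = {a + ?h..b}" using h0 by auto
      finally show ?thesis .
    qed
    have e2: "integral {a..b} (fB n) = integral {a..b - ?h} (Bq ?h)"
    proof -
      have "integral {a..b} (fB n) = integral ({a..b - ?h} \<inter> {a..b}) (Bq ?h)"
        unfolding fB_def by (rule integral_restrict_Int)
      also have "{a..b - ?h} \<inter> {a..b} = {a..b - ?h}" using h0 by auto
      finally show ?thesis .
    qed
    have cA: "continuous_on {a..b - ?h} (\<lambda>s. Aq ?h (s + ?h))"
      by (rule continuous_on_compose2[OF Aq_cont[of n]]) (auto intro!: continuous_intros)
    have cW: "continuous_on {a..b - ?h} (\<lambda>s. Wg (s + ?h))"
      by (rule continuous_on_compose2[OF Wg_cont]) (use sub hs_lt[of n] hs_pos[of n] ab a b in \<open>auto intro!: continuous_intros\<close>)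
    have "integral {a..b - ?h} (\<lambda>s. (Wg (s + ?h) - Wg s) / ?h)
        = integral {a..b - ?h} (\<lambda>s. Aq ?h (s + ?h) + Bq ?h s)"
      by (rule integral_cong) (use sub h0 in \<open>auto intro!: ident\<close>)
    also have "\<dots> = integral {a..b - ?h} (\<lambda>s. Aq ?h (s + ?h)) + integral {a..b - ?h} (Bq ?h)"
      using integrable_continuous_interval[OF cA] integrable_continuous_interval[OF Bq_cont[of n]]
      by (rule integral_add)
    also have "integral {a..b - ?h} (\<lambda>s. Aq ?h (s + ?h)) = integral {a + ?h..b} (Aq ?h)"
      using integral_shift_real_ivl[of "a + ?h" ?h b "Aq ?h"] by simp
    finally have L1: "integral {a..b - ?h} (\<lambda>s. (Wg (s + ?h) - Wg s) / ?h)
        = integral {a..b} (fA n) + integral {a..b} (fB n)" using e1 e2 by simp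
    have "integral {a..b - ?h} (\<lambda>s. (Wg (s + ?h) - Wg s) / ?h)
        = (integral {a..b - ?h} (\<lambda>s. Wg (s + ?h)) - integral {a..b - ?h} Wg) / ?h"
    proof -
      have "Wg integrable_on {a..b - ?h}" using Wg_int[of a "b - ?h"] sub hs_lt[of n] h0 a b by auto
      then show ?thesis using integral_diff[OF integrable_continuous_interval[OF cW]] by simp
    qed
    also have "integral {a..b - ?h} (\<lambda>s. Wg (s + ?h)) = integral {a + ?h..b} Wg"
      using integral_shift_real_ivl[of "a + ?h" ?h b Wg] by simp
    also have "integral {a + ?h..b} Wg - integral {a..b - ?h} Wg = integral {b - ?h..b} Wg - integral {a..a + ?h} Wg"
    proof -
      have wi: "Wg integrable_on {a..b}" using Wg_int[OF sub] .
      have "integral {a..a + ?h} Wg + integral {a + ?h..b} Wg = integral {a..b} Wg"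
        by (rule Henstock_Kurzweil_Integration.integral_combine[OF _ _ wi]) (use hs_lt[of n] h0 in auto)
      moreover have "integral {a..b - ?h} Wg + integral {b - ?h..b} Wg = integral {a..b} Wg"
        by (rule Henstock_Kurzweil_Integration.integral_combine[OF _ _ wi]) (use hs_lt[of n] h0 in auto)
      ultimately show ?thesis by linarith
    qed
    finally have L2: "integral {a..b - ?h} (\<lambda>s. (Wg (s + ?h) - Wg s) / ?h) = RH n" unfolding RH_def .
    show ?thesis using L1 L2 by simp
  qed

  have dA: "gA integrable_on {a..b}" "(\<lambda>n. integral {a..b} (fA n)) \<longlonglongrightarrow> integral {a..b} gA"
  proof -
    have "gA integrable_on {a..b} \<and> (\<lambda>n. integral {a..b} (fA n)) \<longlonglongrightarrow> integral {a..b} gA"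
    proof -
    have fint: "\<And>n. fA n integrable_on {a..b}" and fbd: "\<And>n x. x \<in> {a..b} \<Longrightarrow> \<bar>fA n x\<bar> \<le> K3 * L"
      and fconv: "\<And>x. x \<in> {a..b} \<Longrightarrow> (\<lambda>n. fA n x) \<longlonglongrightarrow> gA x"
    proof -
      fix n
      show "fA n integrable_on {a..b}"
        unfolding fA_def integrable_restrict_Int
        using integrable_continuous_interval[OF Aq_cont[of n]] hs_pos[of n] by (simp add: Int_absorb2)
      fix \<sigma> assume "\<sigma> \<in> {a..b}"
      show "\<bar>fA n \<sigma>\<bar> \<le> K3 * L"
        unfolding fA_def using Aq_bound[of \<sigma> "hs n"] sub hs_pos[of n] K3_nonneg Lpos by auto
    next
      fix \<sigma> assume s: "\<sigma> \<in> {a..b}"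
      show "(\<lambda>n. fA n \<sigma>) \<longlonglongrightarrow> gA \<sigma>"
      proof (cases "\<sigma> = a")
        case True
        have "fA n \<sigma> = 0" for n using True hs_pos[of n] by (simp add: fA_def)
        then show ?thesis using True by (simp add: gA_def)
      next
        case False
        then have sa: "\<sigma> > a" using s by auto
        have "\<forall>\<^sub>F n in sequentially. hs n < \<sigma> - a"
          using order_tendstoD(2)[OF hs_lim, of "\<sigma> - a"] sa by simp
        then obtain N where N: "\<And>n. n \<ge> N \<Longrightarrow> hs n < \<sigma> - a" by (auto simp: eventually_sequentially)
        have "(\<lambda>n. Aq (hs (n + N)) \<sigma>) \<longlonglongrightarrow> A \<sigma>"
          unfolding A_def
        proof (rule Aq_conv)
          show "\<sigma> \<in> {thl..thh}" using s sub by auto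
          show "(\<lambda>n. hs (n + N)) \<longlonglongrightarrow> 0" using LIMSEQ_ignore_initial_segment[OF hs_lim] .
          show "\<And>n. 0 < hs (n + N)" using hs_pos by auto
          show "\<sigma> - hs (n + N) \<in> {thl..thh}" for n using N[of "n + N"] s a b hs_pos[of "n + N"] by auto
        qed
        then have t: "(\<lambda>n. Aq (hs n) \<sigma>) \<longlonglongrightarrow> A \<sigma>" by (rule LIMSEQ_offset)
        have "Aq (hs n) \<sigma> = fA n \<sigma>" if "n \<ge> N" for n
        proof -
          have "\<sigma> \<in> {a + hs n..b}" using N[OF that] s by auto
          then show ?thesis unfolding fA_def by simp
        qed
        then have ev: "\<forall>\<^sub>F n in sequentially. Aq (hs n) \<sigma> = fA n \<sigma>"
          unfolding eventually_sequentially by blast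
        have "(\<lambda>n. fA n \<sigma>) \<longlonglongrightarrow> A \<sigma>" by (rule Lim_transform_eventually[OF t ev])
        then show ?thesis unfolding gA_def using False by simp
      qed
    qed
    from dct_real[OF fint fbd fconv] show ?thesis by blast
    qed
    then show "gA integrable_on {a..b}" "(\<lambda>n. integral {a..b} (fA n)) \<longlonglongrightarrow> integral {a..b} gA" by auto
  qed

  have dB: "gB integrable_on {a..b}" "(\<lambda>n. integral {a..b} (fB n)) \<longlonglongrightarrow> integral {a..b} gB"
  proof -
    have "gB integrable_on {a..b} \<and> (\<lambda>n. integral {a..b} (fB n)) \<longlonglongrightarrow> integral {a..b} gB"
    proof -
    have fint: "\<And>n. fB n integrable_on {a..b}" and fbd: "\<And>n x. x \<in> {a..b} \<Longrightarrow> \<bar>fB n x\<bar> \<le> (\<delta> * K2) * L"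
      and fconv: "\<And>x. x \<in> {a..b} \<Longrightarrow> (\<lambda>n. fB n x) \<longlonglongrightarrow> gB x"
    proof -
      fix n
      show "fB n integrable_on {a..b}"
        unfolding fB_def integrable_restrict_Int
        using integrable_continuous_interval[OF Bq_cont[of n]] hs_pos[of n] by (simp add: Int_absorb2)
      fix s assume "s \<in> {a..b}"
      show "\<bar>fB n s\<bar> \<le> (\<delta> * K2) * L"
        unfolding fB_def using Bq_bound[of s "hs n"] sub hs_pos[of n] K2_nonneg delta_nonneg Lpos by auto
    next
      fix s assume s: "s \<in> {a..b}"
      show "(\<lambda>n. fB n s) \<longlonglongrightarrow> gB s"
      proof (cases "s = b")
        case True
        have "fB n s = 0" for n using True hs_pos[of n] by (simp add: fB_def)
        then show ?thesis using True by (simp add: gB_def)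
      next
        case False
        then have sb: "s < b" using s by auto
        have "\<forall>\<^sub>F n in sequentially. hs n < b - s"
          using order_tendstoD(2)[OF hs_lim, of "b - s"] sb by simp
        then obtain N where N: "\<And>n. n \<ge> N \<Longrightarrow> hs n < b - s" by (auto simp: eventually_sequentially)
        have "(\<lambda>n. Bq (hs (n + N)) s) \<longlonglongrightarrow> B s"
          unfolding B_def
        proof (rule Bq_conv)
          show "s \<in> {thl..thh}" using s sub by auto
          show "(\<lambda>n. hs (n + N)) \<longlonglongrightarrow> 0" using LIMSEQ_ignore_initial_segment[OF hs_lim] .
          show "\<And>n. 0 < hs (n + N)" using hs_pos by auto
          show "s + hs (n + N) \<in> {thl..thh}" for n using N[of "n + N"] s a b hs_pos[of "n + N"] by auto
        qed
        then have t: "(\<lambda>n. Bq (hs n) s) \<longlonglongrightarrow> B s" by (rule LIMSEQ_offset)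
        have "Bq (hs n) s = fB n s" if "n \<ge> N" for n
        proof -
          have "s \<in> {a..b - hs n}" using N[OF that] s by auto
          then show ?thesis unfolding fB_def by simp
        qed
        then have ev: "\<forall>\<^sub>F n in sequentially. Bq (hs n) s = fB n s"
          unfolding eventually_sequentially by blast
        have "(\<lambda>n. fB n s) \<longlonglongrightarrow> B s" by (rule Lim_transform_eventually[OF t ev])
        then show ?thesis unfolding gB_def using False by simp
      qed
    qed
    from dct_real[OF fint fbd fconv] show ?thesis by blast
    qed
    then show "gB integrable_on {a..b}" "(\<lambda>n. integral {a..b} (fB n)) \<longlonglongrightarrow> integral {a..b} gB" by auto
  qed

  have RHlim: "RH \<longlonglongrightarrow> Wg b - Wg a"
  proof -
    have 1: "(\<lambda>n. integral {b - hs n..b} Wg / hs n) \<longlonglongrightarrow> Wg b"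
    proof (rule avg_lim[where M="CC * L"])
      show "\<bar>Wg s - Wg b\<bar> \<le> CC * L * \<bar>s - b\<bar>" if "s \<in> {b - hs n..b}" for n s
        using Wg_lip[of s b] that hs_lt[of n] a b by auto
      show "0 \<le> CC * L" using CC_nonneg Lpos by simp
      show "Wg integrable_on {b - hs n..b}" for n using Wg_int hs_lt[of n] a b by auto
    qed (use hs_pos hs_lim less_imp_le in auto)
    have 2: "(\<lambda>n. integral {a..a + hs n} Wg / hs n) \<longlonglongrightarrow> Wg a"
    proof (rule avg_lim[where M="CC * L"])
      show "\<bar>Wg s - Wg a\<bar> \<le> CC * L * \<bar>s - a\<bar>" if "s \<in> {a..a + hs n}" for n s
        using Wg_lip[of s a] that hs_lt[of n] a b by auto
      show "0 \<le> CC * L" using CC_nonneg Lpos by simp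
      show "Wg integrable_on {a..a + hs n}" for n using Wg_int hs_lt[of n] a b by auto
    qed (use hs_pos hs_lim less_imp_le in auto)
    show ?thesis using tendsto_diff[OF 1 2] unfolding RH_def by (simp add: diff_divide_distrib)
  qed

  have sumlim: "(\<lambda>n. integral {a..b} (fA n) + integral {a..b} (fB n)) \<longlonglongrightarrow> integral {a..b} gA + integral {a..b} gB"
    using tendsto_add[OF dA(2) dB(2)] .
  have eq: "integral {a..b} gA + integral {a..b} gB = Wg b - Wg a"
  proof -
    have "(\<lambda>n. integral {a..b} (fA n) + integral {a..b} (fB n)) = RH" by (rule ext) (rule key)
    then show ?thesis using LIMSEQ_unique[OF sumlim] RHlim by simp
  qed
  have Aint: "A integrable_on {a..b}"
    by (rule integrable_spike_finite[of "{a}" _ _ gA]) (use dA(1) in \<open>auto simp: gA_def\<close>)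
  have Bint: "B integrable_on {a..b}"
    by (rule integrable_spike_finite[of "{b}" _ _ gB]) (use dB(1) in \<open>auto simp: gB_def\<close>)
  have iA: "integral {a..b} gA = integral {a..b} A"
    by (rule integral_spike[of "{a}"]) (auto simp: gA_def)
  have iB: "integral {a..b} gB = integral {a..b} B"
    by (rule integral_spike[of "{b}"]) (auto simp: gB_def)
  have "((\<lambda>s. A s + B s) has_integral (integral {a..b} A + integral {a..b} B)) {a..b}"
    using has_integral_add[OF integrable_integral[OF Aint] integrable_integral[OF Bint]] .
  moreover have "A s + B s = integral {0..L} (\<lambda>l. (dth s l + dFp s l) * r l)" if "s \<in> {a..b}" for s
  proof -
    have s: "s \<in> {thl..thh}" using that sub by auto
    show ?thesis unfolding A_def B_def
      using integral_add[OF Dr_int(1)[OF s rm rb] Dr_int(2)[OF s rm rb]] by (simp add: distrib_right)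
  qed
  ultimately have "((\<lambda>s. A s + B s) has_integral (Wg b - Wg a)) {a..b}"
    "\<And>s. s \<in> {a..b} \<Longrightarrow> A s + B s = integral {0..L} (\<lambda>l. (dth s l + dFp s l) * r l)"
    using eq iA iB by simp_all
  then show ?thesis using has_integral_cong[of "{a..b}" "\<lambda>s. A s + B s" "\<lambda>s. integral {0..L} (\<lambda>l. (dth s l + dFp s l) * r l)"] by blast
qed

end

definition grid :: "real \<Rightarrow> real \<Rightarrow> nat \<Rightarrow> nat \<Rightarrow> real" where
  "grid a b n i = a + real i * ((b - a) / real n)"

lemma grid_mono: "a \<le> b \<Longrightarrow> i \<le> j \<Longrightarrow> grid a b n i \<le> grid a b n j"
  unfolding grid_def by (intro add_left_mono mult_right_mono) auto

lemma grid_0: "grid a b n 0 = a" by (simp add: grid_def)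
lemma grid_n: "n > 0 \<Longrightarrow> grid a b n n = b" by (simp add: grid_def)
lemma grid_step: "grid a b n (Suc i) - grid a b n i = (b - a) / real n" unfolding grid_def by (simp add: distrib_right diff_divide_distrib[symmetric])

lemma grid_in: "a \<le> b \<Longrightarrow> i \<le> n \<Longrightarrow> n > 0 \<Longrightarrow> grid a b n i \<in> {a..b}"
  using grid_mono[of a b 0 i n] grid_mono[of a b i n n] grid_0[of a b n] grid_n[of n a b] by auto

lemma grid_pick:
  assumes "a < b" "n > 0" "a \<le> s" "s < b"
  shows "\<exists>k<n. grid a b n k \<le> s \<and> s < grid a b n (Suc k) \<and>
           (\<forall>i<n. grid a b n i \<le> s \<and> s < grid a b n (Suc i) \<longrightarrow> i = k)"
proof -
  define w where "w = (b - a) / real n"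
  have w: "w > 0" using assms by (simp add: w_def)
  define q where "q = (s - a) / w"
  have q0: "q \<ge> 0" using assms w by (simp add: q_def)
  have qn: "q < real n"
  proof -
    have "s - a < b - a" using assms by simp
    also have "b - a = real n * w" using assms by (simp add: w_def)
    finally show ?thesis using w by (simp add: q_def divide_less_eq mult.commute)
  qed
  define k where "k = nat \<lfloor>q\<rfloor>"
  have kq: "real k \<le> q" "q < real k + 1" using q0 by (simp_all add: k_def)
  have iff: "grid a b n i \<le> s \<and> s < grid a b n (Suc i) \<longleftrightarrow> real i \<le> q \<and> q < real i + 1" for i
  proof -
    have "grid a b n i \<le> s \<longleftrightarrow> real i * w \<le> s - a" by (simp add: grid_def w_def[symmetric]) linarith
    also have "\<dots> \<longleftrightarrow> real i \<le> q" using w by (simp add: q_def le_divide_eq)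
    finally have 1: "grid a b n i \<le> s \<longleftrightarrow> real i \<le> q" .
    have "s < grid a b n (Suc i) \<longleftrightarrow> s - a < (real i + 1) * w" by (simp add: grid_def w_def[symmetric] algebra_simps)
    also have "\<dots> \<longleftrightarrow> q < real i + 1" using w by (simp add: q_def divide_less_eq)
    finally show ?thesis using 1 by simp
  qed
  have kn: "k < n" using kq qn by linarith
  show ?thesis
  proof (intro exI[of _ k] conjI allI impI)
    show "k < n" by (rule kn)
    show "grid a b n k \<le> s" "s < grid a b n (Suc k)" using iff[of k] kq by auto
    fix i assume "i < n" "grid a b n i \<le> s \<and> s < grid a b n (Suc i)"
    then have "real i \<le> q" "q < real i + 1" using iff[of i] by auto
    then show "i = k" using kq by linarith
  qed
qed


lemma sum_pick:
  fixes n k :: nat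
  assumes "k < n" "\<And>i. i < n \<Longrightarrow> P i \<longleftrightarrow> i = k"
  shows "(\<Sum>i<n. if P i then f i else (0::real)) = f k"
proof -
  have "(\<Sum>i<n. if P i then f i else 0) = (\<Sum>i<n. if i = k then f i else 0)"
    by (rule sum.cong) (use assms in auto)
  also have "\<dots> = f k" using assms(1) sum.delta[of "{..<n}" k f] by simp
  finally show ?thesis .
qed

lemma strad_n:
  fixes \<psi> :: "real \<Rightarrow> real \<Rightarrow> real" and \<Psi> mm :: "real \<Rightarrow> real"
  assumes ab: "a < b" and n: "n > 0"
    and int: "\<And>u x y. u \<in> {a..b} \<Longrightarrow> a \<le> x \<Longrightarrow> y \<le> b \<Longrightarrow> \<psi> u integrable_on {x..y}"
    and mono: "\<And>u s v. a \<le> u \<Longrightarrow> u \<le> s \<Longrightarrow> s \<le> v \<Longrightarrow> v \<le> b \<Longrightarrow> \<psi> u s \<le> \<Psi> s \<and> \<Psi> s \<le> \<psi> v s"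
    and gap: "\<And>u s v. a \<le> u \<Longrightarrow> u \<le> s \<Longrightarrow> s \<le> v \<Longrightarrow> v \<le> b \<Longrightarrow> \<psi> v s - \<psi> u s \<le> Cg * (mm v - mm u)"
  shows "\<exists>Lo Up SL SU. (Lo has_integral SL) {a..b} \<and> (Up has_integral SU) {a..b} \<and>
     (\<forall>s\<in>{a..b}. Lo s \<le> \<Psi> s \<and> \<Psi> s \<le> Up s) \<and> SU - SL \<le> (b - a) / real n * (Cg * (mm b - mm a)) \<and>
     SL = (\<Sum>i<n. integral {grid a b n i..grid a b n (Suc i)} (\<psi> (grid a b n i))) \<and>
     SU = (\<Sum>i<n. integral {grid a b n i..grid a b n (Suc i)} (\<psi> (grid a b n (Suc i))))"
proof -
  let ?t = "grid a b n"
  define G where "G = ?t ` {..n}"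
  have finG: "finite G" by (simp add: G_def)
  have tin: "i \<le> n \<Longrightarrow> ?t i \<in> {a..b}" for i using grid_in[of a b i n] ab n by auto
  have tb: "?t n = b" using grid_n[OF n] .
  have ta: "?t 0 = a" using grid_0 .
  have tmono: "i \<le> j \<Longrightarrow> ?t i \<le> ?t j" for i j using grid_mono[of a b i j n] ab by auto
  define LoC where "LoC s = (\<Sum>i<n. if s \<in> {?t i..?t (Suc i)} then \<psi> (?t i) s else 0)" for s
  define UpC where "UpC s = (\<Sum>i<n. if s \<in> {?t i..?t (Suc i)} then \<psi> (?t (Suc i)) s else 0)" for s
  define Lo where "Lo s = (\<Sum>i<n. if ?t i \<le> s \<and> s < ?t (Suc i) then \<psi> (?t i) s else 0) + (if s = b then \<Psi> b else 0)" for s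
  define Up where "Up s = (\<Sum>i<n. if ?t i \<le> s \<and> s < ?t (Suc i) then \<psi> (?t (Suc i)) s else 0) + (if s = b then \<Psi> b else 0)" for s
  define SL where "SL = (\<Sum>i<n. integral {?t i..?t (Suc i)} (\<psi> (?t i)))"
  define SU where "SU = (\<Sum>i<n. integral {?t i..?t (Suc i)} (\<psi> (?t (Suc i))))"
  have piece: "((\<lambda>s. if s \<in> {?t i..?t (Suc i)} then \<psi> u s else 0) has_integral integral {?t i..?t (Suc i)} (\<psi> u)) {a..b}"
    if "i < n" "u \<in> {a..b}" for i u
  proof -
    have sub: "{?t i..?t (Suc i)} \<inter> {a..b} = {?t i..?t (Suc i)}" using tin[of i] tin[of "Suc i"] that by auto
    have "\<psi> u integrable_on {?t i..?t (Suc i)}" using int[OF that(2)] tin[of i] tin[of "Suc i"] that by auto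
    then show ?thesis unfolding has_integral_restrict_Int sub by (simp add: integrable_integral)
  qed
  have LoCI: "(LoC has_integral SL) {a..b}" unfolding LoC_def SL_def
    by (rule has_integral_sum) (use piece tin in auto)
  have UpCI: "(UpC has_integral SU) {a..b}" unfolding UpC_def SU_def
    by (rule has_integral_sum) (use piece tin in auto)
  have same: "(?t i \<le> s \<and> s < ?t (Suc i)) \<longleftrightarrow> s \<in> {?t i..?t (Suc i)}" if "s \<notin> G" "i < n" for s i
  proof -
    have "?t (Suc i) \<in> G" using that(2) by (auto simp: G_def)
    then have "s \<noteq> ?t (Suc i)" using that(1) by auto
    then show ?thesis by auto
  qed
  have bG: "b \<in> G" unfolding G_def using tb by (metis atMost_iff image_eqI order_refl)
  have LoI: "(Lo has_integral SL) {a..b}"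
  proof (rule has_integral_spike_finite[OF finG _ LoCI])
    fix s assume s: "s \<in> {a..b} - G"
    then have "s \<noteq> b" using bG by auto
    have sm: "\<And>i. i \<in> {..<n} \<Longrightarrow> (?t i \<le> s \<and> s < ?t (Suc i)) \<longleftrightarrow> s \<in> {?t i..?t (Suc i)}"
      using same s by blast
    have "(\<Sum>i<n. if ?t i \<le> s \<and> s < ?t (Suc i) then \<psi> (?t i) s else 0)
        = (\<Sum>i<n. if s \<in> {?t i..?t (Suc i)} then \<psi> (?t i) s else 0)"
      by (rule sum.cong[OF refl]) (simp only: sm)
    then show "Lo s = LoC s" unfolding Lo_def LoC_def using \<open>s \<noteq> b\<close> by simp
  qed
  have UpI: "(Up has_integral SU) {a..b}"
  proof (rule has_integral_spike_finite[OF finG _ UpCI])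
    fix s assume s: "s \<in> {a..b} - G"
    then have "s \<noteq> b" using bG by auto
    have sm: "\<And>i. i \<in> {..<n} \<Longrightarrow> (?t i \<le> s \<and> s < ?t (Suc i)) \<longleftrightarrow> s \<in> {?t i..?t (Suc i)}"
      using same s by blast
    have "(\<Sum>i<n. if ?t i \<le> s \<and> s < ?t (Suc i) then \<psi> (?t (Suc i)) s else 0)
        = (\<Sum>i<n. if s \<in> {?t i..?t (Suc i)} then \<psi> (?t (Suc i)) s else 0)"
      by (rule sum.cong[OF refl]) (simp only: sm)
    then show "Up s = UpC s" unfolding Up_def UpC_def using \<open>s \<noteq> b\<close> by simp
  qed
  have bounds: "Lo s \<le> \<Psi> s \<and> \<Psi> s \<le> Up s" if s: "s \<in> {a..b}" for s
  proof (cases "s = b")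
    case True
    have nb: "\<not> (?t i \<le> s \<and> s < ?t (Suc i))" if "i \<in> {..<n}" for i using tmono[of "Suc i" n] that True tb by auto
    have z1: "(\<Sum>i<n. if ?t i \<le> s \<and> s < ?t (Suc i) then \<psi> (?t i) s else 0) = 0"
      by (rule sum.neutral) (simp add: nb)
    have z2: "(\<Sum>i<n. if ?t i \<le> s \<and> s < ?t (Suc i) then \<psi> (?t (Suc i)) s else 0) = 0"
      by (rule sum.neutral) (simp add: nb)
    have "Lo s = \<Psi> b" "Up s = \<Psi> b" unfolding Lo_def Up_def using True z1 z2 by simp_all
    then show ?thesis using True by simp
  next
    case False
    then have sb: "s < b" using s by auto
    have as: "a \<le> s" using s by simp
    from grid_pick[OF ab n as sb] obtain k where k: "k < n" "?t k \<le> s" "s < ?t (Suc k)"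
      and uq: "\<forall>i<n. ?t i \<le> s \<and> s < ?t (Suc i) \<longrightarrow> i = k"
      by blast
    have P: "\<And>i. i < n \<Longrightarrow> (?t i \<le> s \<and> s < ?t (Suc i)) \<longleftrightarrow> i = k" using uq k by blast
    have "Lo s = \<psi> (?t k) s" unfolding Lo_def using sum_pick[OF k(1) P] False by simp
    moreover have "Up s = \<psi> (?t (Suc k)) s" unfolding Up_def using sum_pick[OF k(1) P] False by simp
    moreover have "\<psi> (?t k) s \<le> \<Psi> s \<and> \<Psi> s \<le> \<psi> (?t (Suc k)) s"
      by (rule mono) (use k tin[of k] tin[of "Suc k"] in auto)
    ultimately show ?thesis by simp
  qed
  have gapn: "SU - SL \<le> (b - a) / real n * (Cg * (mm b - mm a))"
  proof -
    have "SU - SL = (\<Sum>i<n. integral {?t i..?t (Suc i)} (\<psi> (?t (Suc i))) - integral {?t i..?t (Suc i)} (\<psi> (?t i)))"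
      unfolding SU_def SL_def by (simp add: sum_subtractf)
    also have "\<dots> \<le> (\<Sum>i<n. (b - a) / real n * (Cg * (mm (?t (Suc i)) - mm (?t i))))"
    proof (rule sum_mono)
      fix i assume "i \<in> {..<n}"
      then have i: "i < n" by simp
      have i1: "\<psi> (?t (Suc i)) integrable_on {?t i..?t (Suc i)}" "\<psi> (?t i) integrable_on {?t i..?t (Suc i)}"
        using int tin[of i] tin[of "Suc i"] i by auto
      have "integral {?t i..?t (Suc i)} (\<psi> (?t (Suc i))) - integral {?t i..?t (Suc i)} (\<psi> (?t i))
          = integral {?t i..?t (Suc i)} (\<lambda>s. \<psi> (?t (Suc i)) s - \<psi> (?t i) s)"
        using integral_diff[OF i1] by simp
      also have "\<dots> \<le> integral {?t i..?t (Suc i)} (\<lambda>s. Cg * (mm (?t (Suc i)) - mm (?t i)))"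
        by (rule integral_le) (use i1 tin[of i] tin[of "Suc i"] i in \<open>auto intro!: gap integrable_diff\<close>)
      also have "\<dots> = (b - a) / real n * (Cg * (mm (?t (Suc i)) - mm (?t i)))"
        using grid_step[of a b n i] tmono[of i "Suc i"] by simp
      finally show "integral {?t i..?t (Suc i)} (\<psi> (?t (Suc i))) - integral {?t i..?t (Suc i)} (\<psi> (?t i))
          \<le> (b - a) / real n * (Cg * (mm (?t (Suc i)) - mm (?t i)))" .
    qed
    also have "\<dots> = (b - a) / real n * (Cg * (\<Sum>i<n. mm (?t (Suc i)) - mm (?t i)))"
      by (simp add: sum_distrib_left)
    also have "(\<Sum>i<n. mm (?t (Suc i)) - mm (?t i)) = mm b - mm a"
      using sum_lessThan_telescope[of "\<lambda>i. mm (?t i)" n] tb ta by simp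
    finally show ?thesis .
  qed
  have bb: "\<forall>s\<in>{a..b}. Lo s \<le> \<Psi> s \<and> \<Psi> s \<le> Up s" using bounds by blast
  show ?thesis
    apply (rule exI[of _ Lo], rule exI[of _ Up], rule exI[of _ SL], rule exI[of _ SU])
    apply (intro conjI)
         apply (rule LoI)
        apply (rule UpI)
       apply (rule bb)
      apply (rule gapn)
     apply (rule SL_def)
    apply (rule SU_def)
    done
qed


lemma le_over_n:
  fixes x K :: real
  assumes "\<And>n. n > 0 \<Longrightarrow> x \<le> K / real n"
  shows "x \<le> 0"
proof (rule ccontr)
  assume "\<not> x \<le> 0"
  then have x: "x > 0" by simp
  obtain m :: nat where m: "K / x < real m" using reals_Archimedean2 by blast
  let ?n = "Suc m"
  have "K / x < real ?n" using m by simp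
  then have "K < real ?n * x" using x by (simp add: divide_less_eq)
  then have "K / real ?n < x" by (simp add: divide_less_eq mult.commute)
  with assms[of ?n] show False by simp
qed

lemma strad:
  fixes \<psi> :: "real \<Rightarrow> real \<Rightarrow> real" and \<Psi> mm V :: "real \<Rightarrow> real"
  assumes ab: "a < b"
    and int: "\<And>u x y. u \<in> {a..b} \<Longrightarrow> a \<le> x \<Longrightarrow> y \<le> b \<Longrightarrow> \<psi> u integrable_on {x..y}"
    and mono: "\<And>u s v. a \<le> u \<Longrightarrow> u \<le> s \<Longrightarrow> s \<le> v \<Longrightarrow> v \<le> b \<Longrightarrow> \<psi> u s \<le> \<Psi> s \<and> \<Psi> s \<le> \<psi> v s"
    and gap: "\<And>u s v. a \<le> u \<Longrightarrow> u \<le> s \<Longrightarrow> s \<le> v \<Longrightarrow> v \<le> b \<Longrightarrow> \<psi> v s - \<psi> u s \<le> Cg * (mm v - mm u)"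
  shows "\<Psi> integrable_on {a..b}"
    and "(\<And>u v. a \<le> u \<Longrightarrow> u \<le> v \<Longrightarrow> v \<le> b \<Longrightarrow> integral {u..v} (\<psi> u) \<le> V v - V u \<and> V v - V u \<le> integral {u..v} (\<psi> v))
         \<Longrightarrow> integral {a..b} \<Psi> = V b - V a"
proof -
  define K where "K = (b - a) * \<bar>Cg * (mm b - mm a)\<bar>"
  have K0: "K \<ge> 0" using ab by (simp add: K_def)
  have sn: "\<exists>Lo Up SL SU. (Lo has_integral SL) {a..b} \<and> (Up has_integral SU) {a..b} \<and>
     (\<forall>s\<in>{a..b}. Lo s \<le> \<Psi> s \<and> \<Psi> s \<le> Up s) \<and> SU - SL \<le> K / real n \<and> 0 \<le> SU - SL \<and>
     SL = (\<Sum>i<n. integral {grid a b n i..grid a b n (Suc i)} (\<psi> (grid a b n i))) \<and>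
     SU = (\<Sum>i<n. integral {grid a b n i..grid a b n (Suc i)} (\<psi> (grid a b n (Suc i))))" if n: "n > 0" for n
  proof -
    obtain Lo Up SL SU where o: "(Lo has_integral SL) {a..b}" "(Up has_integral SU) {a..b}"
      "\<forall>s\<in>{a..b}. Lo s \<le> \<Psi> s \<and> \<Psi> s \<le> Up s" "SU - SL \<le> (b - a) / real n * (Cg * (mm b - mm a))"
      "SL = (\<Sum>i<n. integral {grid a b n i..grid a b n (Suc i)} (\<psi> (grid a b n i)))"
      "SU = (\<Sum>i<n. integral {grid a b n i..grid a b n (Suc i)} (\<psi> (grid a b n (Suc i))))"
      using strad_n[where \<psi>=\<psi> and \<Psi>=\<Psi> and mm=mm and Cg=Cg and a=a and b=b and n=n, OF ab n int mono gap] by blast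
    have "(b - a) / real n * (Cg * (mm b - mm a)) \<le> K / real n"
      unfolding K_def using ab by (simp add: divide_right_mono)
    moreover have "0 \<le> SU - SL"
    proof -
      have "SL \<le> SU" by (rule has_integral_le[OF o(1) o(2)]) (use o(3) in force)
      then show ?thesis by simp
    qed
    ultimately show ?thesis using o by (intro exI[of _ Lo] exI[of _ Up] exI[of _ SL] exI[of _ SU]) auto
  qed
  show I: "\<Psi> integrable_on {a..b}"
  proof (rule integrable_straddle)
    fix e :: real assume e: "e > 0"
    obtain m :: nat where m: "K / e < real m" using reals_Archimedean2 by blast
    let ?n = "Suc m"
    have "K < real m * e" using m e by (simp add: divide_less_eq)
    then have "K < real ?n * e" using e by (simp add: distrib_right)
    then have Kn: "K / real ?n < e" by (simp add: divide_less_eq mult.commute)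
    obtain Lo Up SL SU where o: "(Lo has_integral SL) {a..b}" "(Up has_integral SU) {a..b}"
      "\<forall>s\<in>{a..b}. Lo s \<le> \<Psi> s \<and> \<Psi> s \<le> Up s" "SU - SL \<le> K / real ?n" "0 \<le> SU - SL"
      using sn[of ?n] by auto
    have "\<bar>SL - SU\<bar> < e" using o(4,5) Kn by simp
    then show "\<exists>g h i j. (g has_integral i) {a..b} \<and> (h has_integral j) {a..b} \<and> \<bar>i - j\<bar> < e \<and>
        (\<forall>x\<in>{a..b}. g x \<le> \<Psi> x \<and> \<Psi> x \<le> h x)" using o(1-3) by blast
  qed
  assume V: "\<And>u v. a \<le> u \<Longrightarrow> u \<le> v \<Longrightarrow> v \<le> b \<Longrightarrow> integral {u..v} (\<psi> u) \<le> V v - V u \<and> V v - V u \<le> integral {u..v} (\<psi> v)"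
  have d: "\<bar>integral {a..b} \<Psi> - (V b - V a)\<bar> \<le> K / real n" if n: "n > 0" for n
  proof -
    obtain Lo Up SL SU where o: "(Lo has_integral SL) {a..b}" "(Up has_integral SU) {a..b}"
      "\<forall>s\<in>{a..b}. Lo s \<le> \<Psi> s \<and> \<Psi> s \<le> Up s" "SU - SL \<le> K / real n"
      "SL = (\<Sum>i<n. integral {grid a b n i..grid a b n (Suc i)} (\<psi> (grid a b n i)))"
      "SU = (\<Sum>i<n. integral {grid a b n i..grid a b n (Suc i)} (\<psi> (grid a b n (Suc i))))"
      using sn[OF n] by blast
    let ?t = "grid a b n"
    have tin: "i \<le> n \<Longrightarrow> ?t i \<in> {a..b}" for i using grid_in[of a b i n] ab n by auto
    have tm: "?t i \<le> ?t (Suc i)" for i using grid_mono[of a b i "Suc i" n] ab by auto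
    have tel: "(\<Sum>i<n. V (?t (Suc i)) - V (?t i)) = V b - V a"
      using sum_lessThan_telescope[of "\<lambda>i. V (?t i)" n] grid_n[OF n] grid_0 by simp
    have "SL \<le> (\<Sum>i<n. V (?t (Suc i)) - V (?t i))" unfolding o(5)
      by (rule sum_mono) (use V tin tm in \<open>auto simp: less_eq_Suc_le\<close>)
    moreover have "(\<Sum>i<n. V (?t (Suc i)) - V (?t i)) \<le> SU" unfolding o(6)
      by (rule sum_mono) (use V tin tm in \<open>auto simp: less_eq_Suc_le\<close>)
    moreover have "SL \<le> integral {a..b} \<Psi>"
      by (rule has_integral_le[OF o(1) integrable_integral[OF I]]) (use o(3) in force)
    moreover have "integral {a..b} \<Psi> \<le> SU"
      by (rule has_integral_le[OF integrable_integral[OF I] o(2)]) (use o(3) in force)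
    ultimately show ?thesis using o(4) tel by linarith
  qed
  have "\<bar>integral {a..b} \<Psi> - (V b - V a)\<bar> \<le> 0" by (rule le_over_n[OF d])
  then show "integral {a..b} \<Psi> = V b - V a" by simp
qed


lemma deriv_seq_ev:
  fixes f :: "real \<Rightarrow> real"
  assumes "f differentiable (at x within S)" "y \<longlonglongrightarrow> x" "\<forall>\<^sub>F n in sequentially. y n \<in> S \<and> y n \<noteq> x"
  shows "(\<lambda>n. (f (y n) - f x) / (y n - x)) \<longlonglongrightarrow> vector_derivative f (at x within S)"
proof -
  have "(f has_real_derivative vector_derivative f (at x within S)) (at x within S)"
    using assms(1) vector_derivative_works has_real_derivative_iff_has_vector_derivative by blast
  then have t: "((\<lambda>z. (f z - f x) / (z - x)) \<longlongrightarrow> vector_derivative f (at x within S)) (at x within S)"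
    using has_field_derivative_iff by blast
  have "filterlim y (at x within S) sequentially"
    using assms(2-3) by (auto simp: filterlim_at)
  from filterlim_compose[OF t this] show ?thesis .
qed

lemma dR_meas:
  assumes L: "0 < L" and d: "\<And>l. l \<in> {0..L} \<Longrightarrow> Rc differentiable (at l within {0..L})"
  shows "dR L Rc \<in> borel_measurable (lebesgue_on {0..L})"
proof -
  define e where "e n = L / (real n + 2)" for n
  have e0: "e n > 0" for n using L by (simp add: e_def)
  have eL: "e n < L" for n
  proof -
    have "1 < real n + 2" by simp
    then show ?thesis using L by (simp add: e_def divide_less_eq)
  qed
  have elim: "e \<longlonglongrightarrow> 0"
  proof -
    have "(\<lambda>n. L / real (n + 2)) \<longlonglongrightarrow> 0"
      using LIMSEQ_ignore_initial_segment[OF lim_const_over_n[of L], of 2] by simp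
    then show ?thesis unfolding e_def by (simp add: add.commute)
  qed
  have cR: "continuous_on {0..L} Rc"
    using d differentiable_imp_continuous_within continuous_on_eq_continuous_within by blast
  define Q where "Q n l = (Rc (min (l + e n) L) - Rc (min (l + e n) L - e n)) / e n" for n l
  show ?thesis unfolding dR_def
  proof (rule meas_lim[where Q=Q])
    fix n
    have c1: "continuous_on {0..L} (\<lambda>l. Rc (min (l + e n) L))"
      by (rule continuous_on_compose2[OF cR]) (use e0[of n] eL[of n] in \<open>auto intro!: continuous_intros\<close>)
    have c2: "continuous_on {0..L} (\<lambda>l. Rc (min (l + e n) L - e n))"
      by (rule continuous_on_compose2[OF cR]) (use e0[of n] eL[of n] in \<open>auto intro!: continuous_intros\<close>)
    show "continuous_on {0..L} (Q n)" unfolding Q_def using c1 c2 e0[of n]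
      by (intro continuous_on_divide continuous_on_diff continuous_on_const) auto
  next
    fix l assume l: "l \<in> {0..L}"
    show "(\<lambda>n. Q n l) \<longlonglongrightarrow> vector_derivative Rc (at l within {0..L})"
    proof (cases "l < L")
      case True
      have ev: "\<forall>\<^sub>F n in sequentially. e n < L - l" using order_tendstoD(2)[OF elim, of "L - l"] True by simp
      have y: "(\<lambda>n. l + e n) \<longlonglongrightarrow> l" using tendsto_add[OF tendsto_const elim, of l] by simp
      have ev2: "\<forall>\<^sub>F n in sequentially. l + e n \<in> {0..L} \<and> l + e n \<noteq> l"
        using ev
      proof eventually_elim
        case (elim n)
        then show ?case using l e0[of n] by auto
      qed
      have t: "(\<lambda>n. (Rc (l + e n) - Rc l) / (l + e n - l)) \<longlonglongrightarrow> vector_derivative Rc (at l within {0..L})"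
        by (rule deriv_seq_ev[OF d[OF l] y ev2])
      have ev3: "\<forall>\<^sub>F n in sequentially. (Rc (l + e n) - Rc l) / (l + e n - l) = Q n l"
        using ev by eventually_elim (simp add: Q_def)
      show ?thesis by (rule Lim_transform_eventually[OF t ev3])
    next
      case False
      then have lL: "l = L" using l by auto
      have y: "(\<lambda>n. L - e n) \<longlonglongrightarrow> L" using tendsto_diff[OF tendsto_const elim, of L] by simp
      have ev2: "\<forall>\<^sub>F n in sequentially. L - e n \<in> {0..L} \<and> L - e n \<noteq> L"
      proof (intro always_eventually allI)
        fix n show "L - e n \<in> {0..L} \<and> L - e n \<noteq> L" using e0[of n] eL[of n] by auto
      qed
      have t: "(\<lambda>n. (Rc (L - e n) - Rc L) / (L - e n - L)) \<longlonglongrightarrow> vector_derivative Rc (at L within {0..L})"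
        by (rule deriv_seq_ev[OF d[of L] y ev2]) (use L in auto)
      have eq: "(Rc (L - e n) - Rc L) / (L - e n - L) = Q n L" for n
        using e0[of n] eL[of n] by (simp add: Q_def min_def field_simps)
      show ?thesis using t unfolding eq lL .
    qed
  qed
qed

lemma dR_ftc:
  assumes L: "0 < L" and d: "\<And>l. l \<in> {0..L} \<Longrightarrow> Rc differentiable (at l within {0..L})"
  shows "(dR L Rc has_integral (Rc L - Rc 0)) {0..L}"
  unfolding dR_def
  by (rule fundamental_theorem_of_calculus) (use L d vector_derivative_works in auto)

lemma dR_id: "0 < L \<Longrightarrow> l \<in> {0..L} \<Longrightarrow> dR L (\<lambda>l. l) l = 1"
  unfolding dR_def by (rule vector_derivative_within_closed_interval) auto

lemma ret_id: "0 < L \<Longrightarrow> retention L (\<lambda>l. l)"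
  unfolding retention_def using dR_id[of L] by (auto intro: differentiableI_vector[OF has_vector_derivative_id])


context env begin

lemma ret_facts:
  assumes "retention L Rc"
  shows "dR L Rc \<in> borel_measurable (lebesgue_on {0..L})"
    and "\<And>l. l \<in> {0..L} \<Longrightarrow> \<bar>dR L Rc l\<bar> \<le> 1"
    and "\<And>l. l \<in> {0..L} \<Longrightarrow> 0 \<le> dR L Rc l \<and> dR L Rc l \<le> 1"
    and "(dR L Rc has_integral Rc L) {0..L}"
proof -
  have d: "\<And>l. l \<in> {0..L} \<Longrightarrow> Rc differentiable (at l within {0..L})"
    and b: "\<And>l. l \<in> {0..L} \<Longrightarrow> 0 \<le> dR L Rc l \<and> dR L Rc l \<le> 1" and z: "Rc 0 = 0"
    using assms unfolding retention_def by auto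
  show "dR L Rc \<in> borel_measurable (lebesgue_on {0..L})" by (rule dR_meas[OF Lpos d])
  show "\<And>l. l \<in> {0..L} \<Longrightarrow> \<bar>dR L Rc l\<bar> \<le> 1" using b by fastforce
  show "\<And>l. l \<in> {0..L} \<Longrightarrow> 0 \<le> dR L Rc l \<and> dR L Rc l \<le> 1" by (rule b)
  show "(dR L Rc has_integral Rc L) {0..L}" using dR_ftc[OF Lpos d] z by simp
qed

lemma D_int:
  assumes "retention L Rc" "s \<in> {thl..thh}"
  shows "(\<lambda>l. (dth s l + dFp s l) * dR L Rc l) integrable_on {0..L}"
proof -
  have "(\<lambda>l. dth s l * dR L Rc l + dFp s l * dR L Rc l) integrable_on {0..L}"
    using Dr_int[OF assms(2) ret_facts(1)[OF assms(1)] ret_facts(2)[OF assms(1)]] by (intro integrable_add)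
  then show ?thesis by (simp add: distrib_right)
qed

lemma D_nonpos: "s \<in> {thl..thh} \<Longrightarrow> dth s l + dFp s l \<le> 0"
  using dth_nonpos dFp_nonpos by (simp add: add_nonpos_nonpos)

lemma D_bound: "s \<in> {thl..thh} \<Longrightarrow> \<bar>dth s l + dFp s l\<bar> \<le> K3 + \<delta> * K2"
  using dth_bound[of s l] dFp_bound[of s l] by linarith

lemma D_mono:
  assumes "retention L R1" "retention L R2" "s \<in> {thl..thh}" "\<And>l. l \<in> {0..L} \<Longrightarrow> dR L R1 l \<le> dR L R2 l"
  shows "integral {0..L} (\<lambda>l. (dth s l + dFp s l) * dR L R2 l) \<le> integral {0..L} (\<lambda>l. (dth s l + dFp s l) * dR L R1 l)"
  by (rule integral_le[OF D_int[OF assms(2,3)] D_int[OF assms(1,3)]])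
     (use assms(4) D_nonpos[OF assms(3)] in \<open>auto intro: mult_left_mono_neg\<close>)

lemma D_gap:
  assumes "retention L R1" "retention L R2" "s \<in> {thl..thh}" "\<And>l. l \<in> {0..L} \<Longrightarrow> dR L R2 l \<le> dR L R1 l"
  shows "integral {0..L} (\<lambda>l. (dth s l + dFp s l) * dR L R2 l) - integral {0..L} (\<lambda>l. (dth s l + dFp s l) * dR L R1 l)
      \<le> (K3 + \<delta> * K2) * (R1 L - R2 L)"
proof -
  let ?C = "K3 + \<delta> * K2"
  have i1: "(\<lambda>l. ?C * (dR L R1 l - dR L R2 l)) integrable_on {0..L}"
  proof -
    have "(\<lambda>l. dR L R1 l - dR L R2 l) integrable_on {0..L}"
      using ret_facts(4)[OF assms(1)] ret_facts(4)[OF assms(2)]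
      by (intro integrable_diff) (auto simp: has_integral_integrable)
    from integrable_cmul[OF this, of ?C] show ?thesis by simp
  qed
  have "integral {0..L} (\<lambda>l. (dth s l + dFp s l) * dR L R2 l) - integral {0..L} (\<lambda>l. (dth s l + dFp s l) * dR L R1 l)
      = integral {0..L} (\<lambda>l. (dth s l + dFp s l) * (dR L R2 l - dR L R1 l))"
    using integral_diff[OF D_int[OF assms(2,3)] D_int[OF assms(1,3)]] by (simp add: right_diff_distrib)
  also have "\<dots> \<le> integral {0..L} (\<lambda>l. ?C * (dR L R1 l - dR L R2 l))"
  proof (rule integral_le)
    show "(\<lambda>l. (dth s l + dFp s l) * (dR L R2 l - dR L R1 l)) integrable_on {0..L}"
      using integrable_diff[OF D_int[OF assms(2,3)] D_int[OF assms(1,3)]] by (simp add: right_diff_distrib)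
    show "(\<lambda>l. ?C * (dR L R1 l - dR L R2 l)) integrable_on {0..L}" by (rule i1)
    fix l assume l: "l \<in> {0..L}"
    have c: "dR L R2 l - dR L R1 l \<le> 0" using assms(4)[OF l] by simp
    have "- ?C \<le> dth s l + dFp s l" using D_bound[OF assms(3), of l] by linarith
    from mult_right_mono_neg[OF this c]
    show "(dth s l + dFp s l) * (dR L R2 l - dR L R1 l) \<le> ?C * (dR L R1 l - dR L R2 l)"
      by (simp add: algebra_simps)
  qed
  also have "\<dots> = ?C * (R1 L - R2 L)"
    using integral_diff[OF has_integral_integrable[OF ret_facts(4)[OF assms(1)]] has_integral_integrable[OF ret_facts(4)[OF assms(2)]]]
      integral_unique[OF ret_facts(4)[OF assms(1)]] integral_unique[OF ret_facts(4)[OF assms(2)]]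
    by simp
  finally show ?thesis .
qed

lemma U_diff:
  assumes R: "retention L Rc" and a: "a \<in> {thl..thh}" and b: "b \<in> {thl..thh}" and ab: "a \<le> b"
  shows "(\<lambda>s. integral {0..L} (\<lambda>l. (dth s l + dFp s l) * dR L Rc l)) integrable_on {a..b}"
    and "Uag L (g b) (F b) Rc pc - Uag L (g a) (F a) Rc pc
         = integral {a..b} (\<lambda>s. integral {0..L} (\<lambda>l. (dth s l + dFp s l) * dR L Rc l))"
proof -
  interpret E: envr g F thl thh L \<delta> K2 K3 "dR L Rc"
    by (intro envr.intro env_axioms envr_axioms.intro ret_facts[OF R])
  have rint: "dR L Rc integrable_on {0..L}" using ret_facts(4)[OF R] by (rule has_integral_integrable)
  have Ueq: "Uag L (g \<theta>) (F \<theta>) Rc pc = - pc - integral {0..L} (dR L Rc) + E.Wg \<theta>" if t: "\<theta> \<in> {thl..thh}" for \<theta>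
  proof -
    have "integral {0..L} (\<lambda>l. (1 - g \<theta> (F \<theta> l)) * dR L Rc l)
        = integral {0..L} (\<lambda>l. dR L Rc l - g \<theta> (F \<theta> l) * dR L Rc l)"
      by (rule integral_cong) (simp add: algebra_simps)
    also have "\<dots> = integral {0..L} (dR L Rc) - E.Wg \<theta>"
      unfolding E.Wg_def using integral_diff[OF rint GGr_int[OF t t ret_facts(1,2)[OF R]]] by simp
    finally show ?thesis unfolding Uag_def by simp
  qed
  have "(\<lambda>s. integral {0..L} (\<lambda>l. (dth s l + dFp s l) * dR L Rc l)) integrable_on {a..b} \<and>
        Uag L (g b) (F b) Rc pc - Uag L (g a) (F a) Rc pc
         = integral {a..b} (\<lambda>s. integral {0..L} (\<lambda>l. (dth s l + dFp s l) * dR L Rc l))"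
  proof (cases "a = b")
    case True then show ?thesis using has_integral_refl(2) by (auto simp: integrable_on_def)
  next
    case False
    then have "a < b" using ab by simp
    from E.Phi[OF a b this] show ?thesis using Ueq[OF a] Ueq[OF b]
      by (simp add: has_integral_integrable integral_unique)
  qed
  then show "(\<lambda>s. integral {0..L} (\<lambda>l. (dth s l + dFp s l) * dR L Rc l)) integrable_on {a..b}"
    "Uag L (g b) (F b) Rc pc - Uag L (g a) (F a) Rc pc
         = integral {a..b} (\<lambda>s. integral {0..L} (\<lambda>l. (dth s l + dFp s l) * dR L Rc l))" by auto
qed

end

context env begin

lemma main_equiv:
  fixes R :: "real \<Rightarrow> real \<Rightarrow> real" and p :: "real \<Rightarrow> real"
  assumes Rret: "\<And>\<theta>. \<theta> \<in> {thl..thh} \<Longrightarrow> retention L (R \<theta>)"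
    and submod: "\<And>l \<theta> \<theta>'. l \<in> {0..L} \<Longrightarrow> \<theta> \<in> {thl..thh} \<Longrightarrow> \<theta>' \<in> {thl..thh} \<Longrightarrow>
        \<theta> \<le> \<theta>' \<Longrightarrow> dR L (R \<theta>') l \<le> dR L (R \<theta>) l"
  shows "((\<forall>\<theta>\<in>{thl..thh}. Uag L (g \<theta>) (F \<theta>) (R \<theta>) (p \<theta>) \<ge> Uag L (g \<theta>) (F \<theta>) (\<lambda>l. l) 0)
         \<and> (\<forall>\<theta>\<in>{thl..thh}. \<forall>\<theta>'\<in>{thl..thh}.
              Uag L (g \<theta>) (F \<theta>) (R \<theta>) (p \<theta>) \<ge> Uag L (g \<theta>) (F \<theta>) (R \<theta>') (p \<theta>')))
    \<longleftrightarrow>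
         ((\<forall>\<theta>\<in>{thl..thh}.
              p \<theta> = p thl
                + integral {0..L} (\<lambda>l. (1 - g thl (F thl l)) * dR L (R thl) l)
                - integral {thl..\<theta>} (\<lambda>s. integral {0..L} (\<lambda>l.
                    (vector_derivative (\<lambda>u. g u (F s l)) (at s within {thl..thh})
                     + vector_derivative (g s) (at (F s l) within {0..1})
                       * vector_derivative (\<lambda>u. F u l) (at s within {thl..thh}))
                    * dR L (R s) l))
                - integral {0..L} (\<lambda>l. (1 - g \<theta> (F \<theta> l)) * dR L (R \<theta>) l))
          \<and> p thl \<le> integral {0..L} (\<lambda>l. (1 - g thl (F thl l)) * (1 - dR L (R thl) l)))"
  (is "?LHS \<longleftrightarrow> ?RHS")
proof -
  let ?I = "{thl..thh}"
  define U where "U \<theta> v = Uag L (g \<theta>) (F \<theta>) (R v) (p v)" for \<theta> v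
  define Uid where "Uid \<theta> = Uag L (g \<theta>) (F \<theta>) (\<lambda>l. l) 0" for \<theta>
  define ps where "ps u s = integral {0..L} (\<lambda>l. (dth s l + dFp s l) * dR L (R u) l)" for u s
  define p1 where "p1 s = integral {0..L} (\<lambda>l. (dth s l + dFp s l) * dR L (\<lambda>l. l) l)" for s
  define Psi where "Psi s = ps s s" for s
  have Psi_raw: "(\<lambda>s. integral {0..L} (\<lambda>l.
                    (vector_derivative (\<lambda>u. g u (F s l)) (at s within {thl..thh})
                     + vector_derivative (g s) (at (F s l) within {0..1})
                       * vector_derivative (\<lambda>u. F u l) (at s within {thl..thh}))
                    * dR L (R s) l)) = Psi"
    by (intro ext) (simp add: Psi_def ps_def dth_def dFp_def)
  have retid: "retention L (\<lambda>l. l)" by (rule ret_id[OF Lpos])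
  have UD: "U b u - U a u = integral {a..b} (ps u)" "ps u integrable_on {a..b}"
    if "u \<in> ?I" "a \<in> ?I" "b \<in> ?I" "a \<le> b" for u a b
    using U_diff(1)[OF Rret[OF that(1)] that(2-4)] U_diff(2)[OF Rret[OF that(1)] that(2-4), of "p u"]
    unfolding U_def ps_def by auto
  have UDid: "Uid b - Uid a = integral {a..b} p1" "p1 integrable_on {a..b}"
    if "a \<in> ?I" "b \<in> ?I" "a \<le> b" for a b
    using U_diff(1)[OF retid that] U_diff(2)[OF retid that, of 0] unfolding Uid_def p1_def by auto
  have mono: "ps u s \<le> Psi s \<and> Psi s \<le> ps v s"
    if "thl \<le> u" "u \<le> s" "s \<le> v" "v \<le> thh" for u s v
  proof -
    have uI: "u \<in> ?I" "s \<in> ?I" "v \<in> ?I" using that by auto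
    show ?thesis unfolding Psi_def ps_def
      using D_mono[OF Rret[OF uI(2)] Rret[OF uI(1)] uI(2)] D_mono[OF Rret[OF uI(3)] Rret[OF uI(2)] uI(2)]
        submod[of _ u s] submod[of _ s v] uI that by auto
  qed
  have gap: "ps v s - ps u s \<le> (K3 + \<delta> * K2) * ((- R v L) - (- R u L))"
    if "thl \<le> u" "u \<le> s" "s \<le> v" "v \<le> thh" for u s v
  proof -
    have uI: "u \<in> ?I" "s \<in> ?I" "v \<in> ?I" using that by auto
    have "ps v s - ps u s \<le> (K3 + \<delta> * K2) * (R u L - R v L)"
      unfolding ps_def by (rule D_gap[OF Rret[OF uI(1)] Rret[OF uI(3)] uI(2)]) (use submod uI that in auto)
    then show ?thesis by simp
  qed
  have p1le: "p1 s \<le> Psi s" if "s \<in> ?I" for s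
    unfolding p1_def Psi_def ps_def
    by (rule D_mono[OF Rret[OF that] retid that]) (use ret_facts(3)[OF Rret[OF that]] dR_id[OF Lpos] in auto)
  have Uform: "U \<theta> \<theta> = - p \<theta> - integral {0..L} (\<lambda>l. (1 - g \<theta> (F \<theta> l)) * dR L (R \<theta>) l)" for \<theta>
    unfolding U_def Uag_def by simp
  have FE: "(p \<theta> = p thl
                + integral {0..L} (\<lambda>l. (1 - g thl (F thl l)) * dR L (R thl) l)
                - integral {thl..\<theta>} Psi
                - integral {0..L} (\<lambda>l. (1 - g \<theta> (F \<theta> l)) * dR L (R \<theta>) l))
         \<longleftrightarrow> U \<theta> \<theta> = U thl thl + integral {thl..\<theta>} Psi" for \<theta>
    unfolding Uform by linarith
  have IE: "p thl \<le> integral {0..L} (\<lambda>l. (1 - g thl (F thl l)) * (1 - dR L (R thl) l))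
        \<longleftrightarrow> Uid thl \<le> U thl thl"
  proof -
    have tI: "thl \<in> ?I" using th by auto
    have c: "continuous_on {0..L} (\<lambda>l. 1 - g thl (F thl l))"
      using GG_contL[OF tI tI] by (intro continuous_on_diff continuous_on_const)
    have b: "\<bar>1 - g thl (F thl l)\<bar> \<le> 1" if "l \<in> {0..L}" for l using g_range[OF tI Frange[OF tI]] by auto
    have i1: "(\<lambda>l. (1 - g thl (F thl l)) * dR L (R thl) l) integrable_on {0..L}"
      by (rule kr_int[OF c ret_facts(1)[OF Rret[OF tI]] b ret_facts(2)[OF Rret[OF tI]]])
    have i0: "(\<lambda>l. 1 - g thl (F thl l)) integrable_on {0..L}"
      by (rule integrable_continuous_interval[OF c])
    have "Uid thl = - integral {0..L} (\<lambda>l. 1 - g thl (F thl l))"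
    proof -
      have "integral {0..L} (\<lambda>l. (1 - g thl (F thl l)) * dR L (\<lambda>l. l) l) = integral {0..L} (\<lambda>l. 1 - g thl (F thl l))"
        by (rule integral_cong) (simp add: dR_id[OF Lpos])
      then show ?thesis unfolding Uid_def Uag_def by simp
    qed
    moreover have "integral {0..L} (\<lambda>l. (1 - g thl (F thl l)) * (1 - dR L (R thl) l))
        = integral {0..L} (\<lambda>l. 1 - g thl (F thl l)) - integral {0..L} (\<lambda>l. (1 - g thl (F thl l)) * dR L (R thl) l)"
      using integral_diff[OF i0 i1] by (simp add: right_diff_distrib)
    ultimately show ?thesis using Uform[of thl] by linarith
  qed
  have sub: "thl \<le> \<theta> \<Longrightarrow> \<theta> \<le> thh \<Longrightarrow> u \<in> {thl..\<theta>} \<Longrightarrow> u \<in> ?I" for \<theta> u by auto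
  show ?thesis
  proof
    assume L: ?LHS
    then have IR: "\<And>\<theta>. \<theta> \<in> ?I \<Longrightarrow> Uid \<theta> \<le> U \<theta> \<theta>" and IC: "\<And>\<theta> \<theta>'. \<theta> \<in> ?I \<Longrightarrow> \<theta>' \<in> ?I \<Longrightarrow> U \<theta> \<theta>' \<le> U \<theta> \<theta>"
      unfolding U_def Uid_def by auto
    have env: "U \<theta> \<theta> = U thl thl + integral {thl..\<theta>} Psi" if t: "\<theta> \<in> ?I" for \<theta>
    proof (cases "\<theta> = thl")
      case True then show ?thesis by simp
    next
      case False
      then have lt: "thl < \<theta>" using t by auto
      have "integral {thl..\<theta>} Psi = U \<theta> \<theta> - U thl thl"
      proof (rule strad(2)[where \<psi>=ps and mm="\<lambda>w. - R w L" and Cg="K3 + \<delta> * K2" and V="\<lambda>u. U u u", OF lt])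
        show "ps u integrable_on {x..y}" if "u \<in> {thl..\<theta>}" "thl \<le> x" "y \<le> \<theta>" for u x y
        proof (cases "x \<le> y")
          case True then show ?thesis using UD(2)[of u x y] that t by auto
        next
          case False then show ?thesis by (simp add: integrable_on_empty)
        qed
        show "ps u s \<le> Psi s \<and> Psi s \<le> ps v s" if "thl \<le> u" "u \<le> s" "s \<le> v" "v \<le> \<theta>" for u s v
          using mono[of u s v] that t by auto
        show "ps v s - ps u s \<le> (K3 + \<delta> * K2) * ((- R v L) - (- R u L))" if "thl \<le> u" "u \<le> s" "s \<le> v" "v \<le> \<theta>" for u s v
          using gap[of u s v] that t by auto
        show "integral {u..v} (ps u) \<le> U v v - U u u \<and> U v v - U u u \<le> integral {u..v} (ps v)"
          if "thl \<le> u" "u \<le> v" "v \<le> \<theta>" for u v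
        proof -
          have uI: "u \<in> ?I" "v \<in> ?I" using that t by auto
          have "U v u - U u u = integral {u..v} (ps u)" using UD(1)[OF uI(1) uI(1) uI(2) that(2)] .
          moreover have "U v v - U u v = integral {u..v} (ps v)" using UD(1)[OF uI(2) uI(1) uI(2) that(2)] .
          moreover have "U v u \<le> U v v" "U u v \<le> U u u" using IC uI by auto
          ultimately show ?thesis by linarith
        qed
      qed
      then show ?thesis by simp
    qed
    show ?RHS
    proof
      show "\<forall>\<theta>\<in>?I. p \<theta> = p thl
                + integral {0..L} (\<lambda>l. (1 - g thl (F thl l)) * dR L (R thl) l)
                - integral {thl..\<theta>} (\<lambda>s. integral {0..L} (\<lambda>l.
                    (vector_derivative (\<lambda>u. g u (F s l)) (at s within {thl..thh})
                     + vector_derivative (g s) (at (F s l) within {0..1})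
                       * vector_derivative (\<lambda>u. F u l) (at s within {thl..thh}))
                    * dR L (R s) l))
                - integral {0..L} (\<lambda>l. (1 - g \<theta> (F \<theta> l)) * dR L (R \<theta>) l)"
        unfolding Psi_raw using FE env by blast
      show "p thl \<le> integral {0..L} (\<lambda>l. (1 - g thl (F thl l)) * (1 - dR L (R thl) l))"
        using IE IR[of thl] th by auto
    qed
  next
    assume Rh: ?RHS
    have env: "U \<theta> \<theta> = U thl thl + integral {thl..\<theta>} Psi" if "\<theta> \<in> ?I" for \<theta>
      using Rh that FE unfolding Psi_raw by blast
    have IRl: "Uid thl \<le> U thl thl" using Rh IE by blast
    have Pint: "Psi integrable_on ?I"
    proof (rule strad(1)[where \<psi>=ps and mm="\<lambda>w. - R w L" and Cg="K3 + \<delta> * K2", OF th])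
      show "ps u integrable_on {x..y}" if "u \<in> ?I" "thl \<le> x" "y \<le> thh" for u x y
      proof (cases "x \<le> y")
        case True then show ?thesis using UD(2)[of u x y] that by auto
      next
        case False then show ?thesis by (simp add: integrable_on_empty)
      qed
      show "ps u s \<le> Psi s \<and> Psi s \<le> ps v s" if "thl \<le> u" "u \<le> s" "s \<le> v" "v \<le> thh" for u s v
        using mono that by auto
      show "ps v s - ps u s \<le> (K3 + \<delta> * K2) * ((- R v L) - (- R u L))" if "thl \<le> u" "u \<le> s" "s \<le> v" "v \<le> thh" for u s v
        using gap that by auto
    qed
    have PintS: "Psi integrable_on {x..y}" if "thl \<le> x" "y \<le> thh" for x y
      by (rule integrable_subinterval_real[OF Pint]) (use that in auto)
    have UU: "U \<theta> \<theta> - U \<theta>' \<theta>' = integral {\<theta>'..\<theta>} Psi" if "\<theta>' \<in> ?I" "\<theta> \<in> ?I" "\<theta>' \<le> \<theta>" for \<theta> \<theta>'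
    proof -
      have "integral {thl..\<theta>'} Psi + integral {\<theta>'..\<theta>} Psi = integral {thl..\<theta>} Psi"
        by (rule Henstock_Kurzweil_Integration.integral_combine[OF _ _ PintS]) (use that in auto)
      then show ?thesis using env[OF that(1)] env[OF that(2)] by linarith
    qed
    show ?LHS
    proof -
      have IC: "U \<theta> \<theta>' \<le> U \<theta> \<theta>" if t: "\<theta> \<in> ?I" "\<theta>' \<in> ?I" for \<theta> \<theta>'
      proof (cases "\<theta>' \<le> \<theta>")
        case True
        have "U \<theta> \<theta>' - U \<theta>' \<theta>' = integral {\<theta>'..\<theta>} (ps \<theta>')" using UD(1)[OF t(2) t(2) t(1) True] .
        moreover have "integral {\<theta>'..\<theta>} (ps \<theta>') \<le> integral {\<theta>'..\<theta>} Psi"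
          by (rule integral_le[OF UD(2)[OF t(2) t(2) t(1) True] PintS]) (use mono t True in auto)
        ultimately show ?thesis using UU[OF t(2) t(1) True] by linarith
      next
        case False
        then have le: "\<theta> \<le> \<theta>'" by simp
        have "U \<theta>' \<theta>' - U \<theta> \<theta>' = integral {\<theta>..\<theta>'} (ps \<theta>')" using UD(1)[OF t(2) t(1) t(2) le] .
        moreover have "integral {\<theta>..\<theta>'} Psi \<le> integral {\<theta>..\<theta>'} (ps \<theta>')"
          by (rule integral_le[OF PintS UD(2)[OF t(2) t(1) t(2) le]]) (use mono t le in auto)
        ultimately show ?thesis using UU[OF t(1) t(2) le] by linarith
      qed
      have IR: "Uid \<theta> \<le> U \<theta> \<theta>" if t: "\<theta> \<in> ?I" for \<theta>
      proof -
        have tl: "thl \<in> ?I" "thl \<le> \<theta>" using t th by auto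
        have "Uid \<theta> - Uid thl = integral {thl..\<theta>} p1" using UDid(1)[OF tl(1) t tl(2)] .
        moreover have "integral {thl..\<theta>} p1 \<le> integral {thl..\<theta>} Psi"
          by (rule integral_le[OF UDid(2)[OF tl(1) t tl(2)] PintS]) (use p1le t in auto)
        ultimately show ?thesis using env[OF t] IRl by linarith
      qed
      show ?thesis using IC IR unfolding U_def Uid_def by auto
    qed
  qed
qed

end

theorem corollary1:
  fixes M :: "'s measure"
    and Lo :: "real \<Rightarrow> 's \<Rightarrow> real"
    and F :: "real \<Rightarrow> real \<Rightarrow> real"
    and g :: "real \<Rightarrow> real \<Rightarrow> real"
    and gIn :: "real \<Rightarrow> real"
    and q :: "real \<Rightarrow> real"
    and mu :: "real measure"
    and thl thh Lbar \<delta> :: real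
    and R :: "real \<Rightarrow> real \<Rightarrow> real"
    and p :: "real \<Rightarrow> real"
  assumes P: "prob_space M"
    and Theta: "thl < thh"
    and Lbar: "0 < Lbar"
    and q_meas: "q \<in> borel_measurable borel"
    and q_nonneg: "\<And>\<theta>. 0 \<le> q \<theta>"
    and mu_def: "mu = density (restrict_space lborel {thl..thh}) (\<lambda>\<theta>. ennreal (q \<theta>))"
    and mu_prob: "prob_space mu"
    and Lo_meas: "\<And>\<theta>. \<theta> \<in> {thl..thh} \<Longrightarrow> Lo \<theta> \<in> borel_measurable M"
    and Lo_range: "\<And>\<theta> s. \<theta> \<in> {thl..thh} \<Longrightarrow> s \<in> space M \<Longrightarrow> Lo \<theta> s \<in> {0..Lbar}"
    and F_def: "\<And>\<theta> l. \<theta> \<in> {thl..thh} \<Longrightarrow> F \<theta> l = measure M {s \<in> space M. Lo \<theta> s \<le> l}"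
    and F_cont: "\<And>\<theta>. \<theta> \<in> {thl..thh} \<Longrightarrow> continuous_on UNIV (F \<theta>)"
    and distIn: "distortion gIn"
    and dist: "\<And>\<theta>. \<theta> \<in> {thl..thh} \<Longrightarrow> distortion (g \<theta>)"
    (* (A1) *)
    and A1: "\<And>t \<theta>. t \<in> {0..1} \<Longrightarrow> \<theta> \<in> {thl..thh} \<Longrightarrow> g \<theta> t \<le> gIn t"
    (* (A2) *)
    and A2_diff: "\<And>l \<theta>. \<theta> \<in> {thl..thh} \<Longrightarrow>
        (\<lambda>s. F s l) differentiable (at \<theta> within {thl..thh})"
    and A2_lip: "\<exists>K. \<forall>l. \<forall>\<theta>\<in>{thl..thh}. \<forall>\<theta>'\<in>{thl..thh}.
        \<bar>F \<theta> l - F \<theta>' l\<bar> \<le> K * \<bar>\<theta> - \<theta>'\<bar>"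
    and A2_mono: "\<And>l \<theta>. \<theta> \<in> {thl..thh} \<Longrightarrow>
        vector_derivative (\<lambda>s. F s l) (at \<theta> within {thl..thh}) \<le> 0"
    (* (A3) *)
    and A3_diff: "\<And>\<theta> t. \<theta> \<in> {thl..thh} \<Longrightarrow> t \<in> {0..1} \<Longrightarrow>
        g \<theta> differentiable (at t within {0..1})"
    and A3_bound: "\<And>\<theta> t. \<theta> \<in> {thl..thh} \<Longrightarrow> t \<in> {0..1} \<Longrightarrow>
        vector_derivative (g \<theta>) (at t within {0..1}) \<le> \<delta>"
    and A3_diff_theta: "\<And>\<theta> t. \<theta> \<in> {thl..thh} \<Longrightarrow> t \<in> {0..1} \<Longrightarrow>
        (\<lambda>s. g s t) differentiable (at \<theta> within {thl..thh})"
    and A3_lip: "\<exists>K. \<forall>t\<in>{0..1}. \<forall>\<theta>\<in>{thl..thh}. \<forall>\<theta>'\<in>{thl..thh}.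
        \<bar>g \<theta> t - g \<theta>' t\<bar> \<le> K * \<bar>\<theta> - \<theta>'\<bar>"
    and A3_mono: "\<And>\<theta> t. \<theta> \<in> {thl..thh} \<Longrightarrow> t \<in> {0<..<1} \<Longrightarrow>
        vector_derivative (\<lambda>s. g s t) (at \<theta> within {thl..thh}) \<le> 0"
    (* the menu *)
    and R_ret: "\<And>\<theta>. \<theta> \<in> {thl..thh} \<Longrightarrow> retention Lbar (R \<theta>)"
    and submod: "\<And>l \<theta> \<theta>'. l \<in> {0..Lbar} \<Longrightarrow> \<theta> \<in> {thl..thh} \<Longrightarrow> \<theta>' \<in> {thl..thh} \<Longrightarrow>
        \<theta> \<le> \<theta>' \<Longrightarrow> dR Lbar (R \<theta>') l \<le> dR Lbar (R \<theta>) l"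
    and U_int: "integrable mu (\<lambda>\<theta>. Uag Lbar (g \<theta>) (F \<theta>) (R \<theta>) (p \<theta>))"
    and V_int: "integrable mu (\<lambda>\<theta>. Vin Lbar gIn (F \<theta>) (R \<theta>) (p \<theta>))"
  shows "(((\<forall>\<theta>\<in>{thl..thh}. Uag Lbar (g \<theta>) (F \<theta>) (R \<theta>) (p \<theta>)
                              \<ge> Uag Lbar (g \<theta>) (F \<theta>) (\<lambda>l. l) 0)
          \<and> (\<integral>\<theta>. Vin Lbar gIn (F \<theta>) (R \<theta>) (p \<theta>) \<partial>mu) \<ge> 0)
         \<and> (\<forall>\<theta>\<in>{thl..thh}. \<forall>\<theta>'\<in>{thl..thh}.
              Uag Lbar (g \<theta>) (F \<theta>) (R \<theta>) (p \<theta>) \<ge> Uag Lbar (g \<theta>) (F \<theta>) (R \<theta>') (p \<theta>')))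
    \<longleftrightarrow>
         ((\<forall>\<theta>\<in>{thl..thh}.
              p \<theta> = p thl
                + integral {0..Lbar} (\<lambda>l. (1 - g thl (F thl l)) * dR Lbar (R thl) l)
                - integral {thl..\<theta>} (\<lambda>s. integral {0..Lbar} (\<lambda>l.
                    (vector_derivative (\<lambda>u. g u (F s l)) (at s within {thl..thh})
                     + vector_derivative (g s) (at (F s l) within {0..1})
                       * vector_derivative (\<lambda>u. F u l) (at s within {thl..thh}))
                    * dR Lbar (R s) l))
                - integral {0..Lbar} (\<lambda>l. (1 - g \<theta> (F \<theta> l)) * dR Lbar (R \<theta>) l))
          \<and> p thl \<le> integral {0..Lbar} (\<lambda>l. (1 - g thl (F thl l)) * (1 - dR Lbar (R thl) l))
          \<and> (\<integral>\<theta>. Vin Lbar gIn (F \<theta>) (R \<theta>) (p \<theta>) \<partial>mu) \<ge> 0)"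
proof -
  obtain K2 where K2: "\<forall>l. \<forall>\<theta>\<in>{thl..thh}. \<forall>\<theta>'\<in>{thl..thh}. \<bar>F \<theta> l - F \<theta>' l\<bar> \<le> K2 * \<bar>\<theta> - \<theta>'\<bar>"
    using A2_lip by blast
  obtain K3 where K3: "\<forall>t\<in>{0..1}. \<forall>\<theta>\<in>{thl..thh}. \<forall>\<theta>'\<in>{thl..thh}. \<bar>g \<theta> t - g \<theta>' t\<bar> \<le> K3 * \<bar>\<theta> - \<theta>'\<bar>"
    using A3_lip by blast
  have Frange: "F \<theta> l \<in> {0..1}" if "\<theta> \<in> {thl..thh}" for \<theta> l
    using F_def[OF that, of l] prob_space.prob_le_1[OF P] measure_nonneg by auto
  interpret E: env g F thl thh Lbar \<delta> K2 K3
  proof (unfold_locales)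
    show "thl < thh" by (rule Theta)
    show "0 < Lbar" by (rule Lbar)
    show "\<And>\<theta> l. \<theta> \<in> {thl..thh} \<Longrightarrow> F \<theta> l \<in> {0..1}" by (rule Frange)
    show "\<And>\<theta>. \<theta> \<in> {thl..thh} \<Longrightarrow> continuous_on UNIV (F \<theta>)" by (rule F_cont)
    show "\<And>\<theta> \<theta>' l. \<theta> \<in> {thl..thh} \<Longrightarrow> \<theta>' \<in> {thl..thh} \<Longrightarrow> \<bar>F \<theta> l - F \<theta>' l\<bar> \<le> K2 * \<bar>\<theta> - \<theta>'\<bar>"
      using K2 by blast
    show "\<And>l \<theta>. \<theta> \<in> {thl..thh} \<Longrightarrow> (\<lambda>s. F s l) differentiable (at \<theta> within {thl..thh})" by (rule A2_diff)
    show "\<And>l \<theta>. \<theta> \<in> {thl..thh} \<Longrightarrow> vector_derivative (\<lambda>s. F s l) (at \<theta> within {thl..thh}) \<le> 0" by (rule A2_mono)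
    show "\<And>\<theta>. \<theta> \<in> {thl..thh} \<Longrightarrow> mono_on {0..1} (g \<theta>)" using dist by (simp add: distortion_def)
    show "\<And>\<theta>. \<theta> \<in> {thl..thh} \<Longrightarrow> g \<theta> 0 = 0" using dist by (simp add: distortion_def)
    show "\<And>\<theta>. \<theta> \<in> {thl..thh} \<Longrightarrow> g \<theta> 1 = 1" using dist by (simp add: distortion_def)
    show "\<And>\<theta> t. \<theta> \<in> {thl..thh} \<Longrightarrow> t \<in> {0..1} \<Longrightarrow> g \<theta> differentiable (at t within {0..1})" by (rule A3_diff)
    show "\<And>\<theta> t. \<theta> \<in> {thl..thh} \<Longrightarrow> t \<in> {0..1} \<Longrightarrow> vector_derivative (g \<theta>) (at t within {0..1}) \<le> \<delta>" by (rule A3_bound)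
    show "\<And>\<theta> t. \<theta> \<in> {thl..thh} \<Longrightarrow> t \<in> {0..1} \<Longrightarrow> (\<lambda>s. g s t) differentiable (at \<theta> within {thl..thh})" by (rule A3_diff_theta)
    show "\<And>t \<theta> \<theta>'. t \<in> {0..1} \<Longrightarrow> \<theta> \<in> {thl..thh} \<Longrightarrow> \<theta>' \<in> {thl..thh} \<Longrightarrow> \<bar>g \<theta> t - g \<theta>' t\<bar> \<le> K3 * \<bar>\<theta> - \<theta>'\<bar>"
      using K3 by blast
    show "\<And>\<theta> t. \<theta> \<in> {thl..thh} \<Longrightarrow> t \<in> {0<..<1} \<Longrightarrow> vector_derivative (\<lambda>s. g s t) (at \<theta> within {thl..thh}) \<le> 0" by (rule A3_mono)
  qed
  show ?thesis using E.main_equiv[where R=R and p=p, OF R_ret submod] by blast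
qed


end
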